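(* Under the hypotheses below, define for $r,r'\in C$ the two-layer transfer matrices $\mathbf T(r,r'):=T^{[0]}(r)\,T^{[1]}(r')$ and $\dot{\mathbf T}(r,r'):=\dot T^{[0]}(r)\,\dot T^{[1]}(r')$, operators on $W=\bigotimes_{l,m}V_{(1_l2_m)}$. If there exists $(t,t')\in C^2$ such that $\dot{\mathbf T}(t,t')$ is diagonalizable with pairwise distinct eigenvalues, then $[\mathbf T(r,r'),\mathbf T(s,s')]=0$ for all $(r,r'),(s,s')\in C^2$.
   Context: Let $V$ be a finite-dimensional complex vector space and $C$ a set (of spectral parameters). Let $R,\dot R,\ddot R,\dddot R:\mathbb{Z}/2\mathbb{Z}\times C^3\to\mathrm{End}(V\otimes V\otimes V)$ be maps; write $X^{[\sigma]}(r_1,r_2,r_3)$ for the value of $X\in\{R,\dot R,\ddot R,\dddot R\}$ at $(\sigma,r_1,r_2,r_3)$. Superscript colors $[\sigma]$ are always read modulo 2. Notation: consider a finite totally ordered set of "planes", each plane $\alpha$ carrying a parameter $r_\alpha\in C$. For each pair $\alpha<\beta$ let $V_{(\alpha\beta)}$ be a copy of $V$. For $\alpha<\beta<\gamma$, $X^{[\sigma]}_{(\alpha\beta\gamma)}$ denotes the operator on the tensor product of all the spaces $V_{(\cdot\cdot)}$ under consideration that acts as $X^{[\sigma]}(r_\alpha,r_\beta,r_\gamma)$ on $V_{(\alpha\beta)}\otimes V_{(\alpha\gamma)}\otimes V_{(\beta\gamma)}$ (in this order) and as the identity on all other factors. Bicolored tetrahedron equations (BTE$[\sigma]$): for any four planes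 $1<2<3<4$ with arbitrary parameters $r_1,r_2,r_3,r_4\in C$, on $V_{(12)}\otimes V_{(13)}\otimes V_{(14)}\otimes V_{(23)}\otimes V_{(24)}\otimes V_{(34)}$, $$R^{[\sigma]}_{(123)}\dot R^{[\sigma+1]}_{(124)}\ddot R^{[\sigma]}_{(134)}\dddot R^{[\sigma+1]}_{(234)}=\dddot R^{[\sigma]}_{(234)}\ddot R^{[\sigma+1]}_{(134)}\dot R^{[\sigma]}_{(124)}R^{[\sigma+1]}_{(123)}.$$ Fix integers $L,M\ge1$, planes $1_1<\dots<1_{2L}<2_1<\dots<2_{2M}$ with fixed arbitrary parameters $r_{1_l},r_{2_m}\in C$. Trace reduction: for planes $\alpha<\beta$ larger than all $1_l$, define $$\mathbf{R}^{[\sigma]}_{\alpha\beta}:=\mathrm{Tr}_{V_{(\alpha\beta)}}\Bigl(R^{[\sigma+1]}_{(1_1\alpha\beta)}R^{[\sigma+2]}_{(1_2\alpha\beta)}\cdots R^{[\sigma+2L]}_{(1_{2L}\alpha\beta)}\Bigr)$$ (partial trace over $V_{(\alpha\beta)}$), an operator on $\bigotimes_l(V_{(1_l\alpha)}\otimes V_{(1_l\beta)})$; $\dot{\mathbf R},\ddot{\mathbf R}$ are defined likewise from $\dot R,\ddot R$. Layer transfer matrix: for $r\in C$, let $3$ be an extra plane larger than all $2_m$ with parameter $r_3=r$, and set $$T^{[\sigma]}(r):=\mathrm{Tr}_{\bigotimes_l V_{(1_l3)}}\Bigl(\mathbf R^{[\sigma+1]}_{2_1 3}\,\mathbf R^{[\sigma+2]}_{2_2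 3}\cdots\mathbf R^{[\sigma+2M]}_{2_{2M}3}\Bigr),$$ an operator on $W=\bigotimes_{l,m}V_{(1_l2_m)}$ (it depends only on $r$, not on the label of the extra plane). $\dot T^{[\sigma]}(r)$ is defined the same way with $\mathbf R$ replaced by $\dot{\mathbf R}$. Standing hypotheses: $R,\dot R,\ddot R,\dddot R$ satisfy BTE$[\sigma]$ for both $\sigma\in\mathbb{Z}/2\mathbb{Z}$ and all parameters; $\dddot R^{[\sigma]}(r_1,r_2,r_3)$ is invertible for all $\sigma$ and all $r_1,r_2,r_3\in C$; and for every $\sigma$ and all parameters of two planes $3<4$ larger than all $1_l,2_m$, the trace reduction $\ddot{\mathbf R}^{[\sigma]}_{34}$ is invertible. *)

theory Defs
  imports Complex_Main "HOL-Library.Z2" "HOL-Library.FuncSet"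
begin

text \<open>
Model: V has a finite basis indexed by a finite type 'b, so V = 'b => complex.
A tensor product of copies of V indexed by a finite set S of "slots" has basis
states S = S ->E UNIV; an operator on it is given by its matrix kernel
('s => 'b) => ('s => 'b) => complex, only relevant on states S.
Colours Z/2 are the type bit of HOL-Library.Z2.
\<close>

type_synonym ('s, 'b) kop = "('s \<Rightarrow> 'b) \<Rightarrow> ('s \<Rightarrow> 'b) \<Rightarrow> complex"
type_synonym 'b k3 = "('b \<times> 'b \<times> 'b) \<Rightarrow> ('b \<times> 'b \<times> 'b) \<Rightarrow> complex"

definition states :: "'s set \<Rightarrow> ('s \<Rightarrow> 'b::finite) set" where
  "states S = PiE S (\<lambda>_. UNIV)"

definition opid :: "'s set \<Rightarrow> ('s, 'b::finite) kop" where
  "opid S x y = (if x = y then 1 else 0)"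

definition opmul :: "'s set \<Rightarrow> ('s, 'b::finite) kop \<Rightarrow> ('s, 'b) kop \<Rightarrow> ('s, 'b) kop" where
  "opmul S A B x y = (\<Sum>z\<in>states S. A x z * B z y)"

definition opprod :: "'s set \<Rightarrow> ('s, 'b::finite) kop list \<Rightarrow> ('s, 'b) kop" where
  "opprod S As = foldr (opmul S) As (opid S)"

definition opeq :: "'s set \<Rightarrow> ('s, 'b::finite) kop \<Rightarrow> ('s, 'b) kop \<Rightarrow> bool" where
  "opeq S A B \<longleftrightarrow> (\<forall>x\<in>states S. \<forall>y\<in>states S. A x y = B x y)"

definition op_invertible :: "'s set \<Rightarrow> ('s, 'b::finite) kop \<Rightarrow> bool" where
  "op_invertible S A \<longleftrightarrow> (\<exists>B. opeq S (opmul S A B) (opid S) \<and> opeq S (opmul S B A) (opid S))"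

definition simple_diagonalizable :: "'s set \<Rightarrow> ('s, 'b::finite) kop \<Rightarrow> bool" where
  "simple_diagonalizable S A \<longleftrightarrow>
     (\<exists>P Q (ev :: ('s \<Rightarrow> 'b) \<Rightarrow> complex).
        opeq S (opmul S P Q) (opid S) \<and> opeq S (opmul S Q P) (opid S) \<and>
        inj_on ev (states S) \<and>
        opeq S (opmul S Q (opmul S A P)) (\<lambda>x y. if x = y then ev x else 0))"

definition lift :: "'s set \<Rightarrow> 's set \<Rightarrow> ('s, 'b::finite) kop \<Rightarrow> ('s, 'b) kop" where
  "lift S T A x y = A (restrict x T) (restrict y T) * (if (\<forall>s\<in>S - T. x s = y s) then 1 else 0)"

definition loc :: "'s set \<Rightarrow> 'b::finite k3 \<Rightarrow> 's \<Rightarrow> 's \<Rightarrow> 's \<Rightarrow> ('s, 'b) kop" where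
  "loc S K a b c = lift S {a, b, c} (\<lambda>x y. K (x a, x b, x c) (y a, y b, y c))"

definition merge :: "'s set \<Rightarrow> ('s \<Rightarrow> 'b) \<Rightarrow> ('s \<Rightarrow> 'b) \<Rightarrow> 's \<Rightarrow> 'b" where
  "merge T x z = (\<lambda>s. if s \<in> T then z s else x s)"

text \<open>Partial trace over the slots T; the result is an operator on S - T.\<close>
definition ptrace :: "'s set \<Rightarrow> 's set \<Rightarrow> ('s, 'b::finite) kop \<Rightarrow> ('s, 'b) kop" where
  "ptrace S T A x y = (\<Sum>z\<in>states T. A (merge T x z) (merge T y z))"

text \<open>Bicolored tetrahedron equation BTE[sigma]; planes are labelled 1,2,3,4 (nat).\<close>
definition BTE :: "(bit \<Rightarrow> 'c \<Rightarrow> 'c \<Rightarrow> 'c \<Rightarrow> 'b::finite k3) \<Rightarrow> (bit \<Rightarrow> 'c \<Rightarrow> 'c \<Rightarrow> 'c \<Rightarrow> 'b k3) \<Rightarrow>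
    (bit \<Rightarrow> 'c \<Rightarrow> 'c \<Rightarrow> 'c \<Rightarrow> 'b k3) \<Rightarrow> (bit \<Rightarrow> 'c \<Rightarrow> 'c \<Rightarrow> 'c \<Rightarrow> 'b k3) \<Rightarrow> bit \<Rightarrow> bool" where
  "BTE R R1 R2 R3 \<sigma> \<longleftrightarrow>
    (\<forall>p1 p2 p3 p4.
      let S = {(1::nat, 2::nat), (1, 3), (1, 4), (2, 3), (2, 4), (3, 4)} in
      opeq S
        (opprod S [loc S (R \<sigma> p1 p2 p3) (1, 2) (1, 3) (2, 3),
                   loc S (R1 (\<sigma> + 1) p1 p2 p4) (1, 2) (1, 4) (2, 4),
                   loc S (R2 \<sigma> p1 p3 p4) (1, 3) (1, 4) (3, 4),
                   loc S (R3 (\<sigma> + 1) p2 p3 p4) (2, 3) (2, 4) (3, 4)])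
        (opprod S [loc S (R3 \<sigma> p2 p3 p4) (2, 3) (2, 4) (3, 4),
                   loc S (R2 (\<sigma> + 1) p1 p3 p4) (1, 3) (1, 4) (3, 4),
                   loc S (R1 \<sigma> p1 p2 p4) (1, 2) (1, 4) (2, 4),
                   loc S (R (\<sigma> + 1) p1 p2 p3) (1, 2) (1, 3) (2, 3)]))"

definition k3_invertible :: "'b::finite k3 \<Rightarrow> bool" where
  "k3_invertible K \<longleftrightarrow>
    (let S = {(1::nat, 2::nat), (1, 3), (2, 3)} in op_invertible S (loc S K (1, 2) (1, 3) (2, 3)))"

text \<open>Planes: One l (l = 1..2L), Two m (m = 1..2M), and extra planes Three < Four
larger than all of them.\<close>
datatype plane = One nat | Two nat | Three | Four

type_synonym slot = "plane \<times> plane"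

definition TS :: "nat \<Rightarrow> plane \<Rightarrow> plane \<Rightarrow> slot set" where
  "TS L \<alpha> \<beta> = {(One l, \<alpha>) | l. l \<in> {1..2*L}} \<union> {(One l, \<beta>) | l. l \<in> {1..2*L}}"

text \<open>Trace reduction bold X^[sigma]_{alpha beta}, planes alpha < beta with parameters pa, pb;
r1 l is the parameter of plane 1_l. Operator on the slots TS L alpha beta.\<close>
definition trred :: "(bit \<Rightarrow> 'c \<Rightarrow> 'c \<Rightarrow> 'c \<Rightarrow> 'b::finite k3) \<Rightarrow> nat \<Rightarrow> (nat \<Rightarrow> 'c) \<Rightarrow> bit \<Rightarrow>
     plane \<Rightarrow> plane \<Rightarrow> 'c \<Rightarrow> 'c \<Rightarrow> (slot, 'b) kop" where
  "trred X L r1 \<sigma> \<alpha> \<beta> pa pb =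
    (let S = TS L \<alpha> \<beta> \<union> {(\<alpha>, \<beta>)} in
     ptrace S {(\<alpha>, \<beta>)}
       (opprod S (map (\<lambda>l. loc S (X (\<sigma> + of_nat l) (r1 l) pa pb) (One l, \<alpha>) (One l, \<beta>) (\<alpha>, \<beta>))
                      [1..<2*L+1])))"

definition Wslots :: "nat \<Rightarrow> nat \<Rightarrow> slot set" where
  "Wslots L M = {(One l, Two m) | l m. l \<in> {1..2*L} \<and> m \<in> {1..2*M}}"

definition transfer :: "(bit \<Rightarrow> 'c \<Rightarrow> 'c \<Rightarrow> 'c \<Rightarrow> 'b::finite k3) \<Rightarrow> nat \<Rightarrow> nat \<Rightarrow>
     (nat \<Rightarrow> 'c) \<Rightarrow> (nat \<Rightarrow> 'c) \<Rightarrow> bit \<Rightarrow> 'c \<Rightarrow> (slot, 'b) kop" where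
  "transfer X L M r1 r2 \<sigma> r =
    (let T3 = {(One l, Three) | l. l \<in> {1..2*L}};
         S = Wslots L M \<union> T3 in
     ptrace S T3
       (opprod S (map (\<lambda>m. lift S (TS L (Two m) Three)
                              (trred X L r1 (\<sigma> + of_nat m) (Two m) Three (r2 m) r))
                      [1..<2*M+1])))"

definition transfer2 :: "(bit \<Rightarrow> 'c \<Rightarrow> 'c \<Rightarrow> 'c \<Rightarrow> 'b::finite k3) \<Rightarrow> nat \<Rightarrow> nat \<Rightarrow>
     (nat \<Rightarrow> 'c) \<Rightarrow> (nat \<Rightarrow> 'c) \<Rightarrow> 'c \<Rightarrow> 'c \<Rightarrow> (slot, 'b) kop" where
  "transfer2 X L M r1 r2 r r' =
     opmul (Wslots L M) (transfer X L M r1 r2 0 r) (transfer X L M r1 r2 1 r')"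

end

theory Submission
  imports Defs
begin

lemma states_iff: "x \<in> states S \<longleftrightarrow> (\<forall>s. s \<notin> S \<longrightarrow> x s = undefined)"
  by (auto simp: states_def PiE_def extensional_def)

lemma finite_states: "finite S \<Longrightarrow> finite (states S :: ('s \<Rightarrow> 'b::finite) set)"
  unfolding states_def by (rule finite_PiE) auto

lemma restrict_states[simp]: "restrict x T \<in> states T"
  by (simp add: states_iff)

lemma restrict_id_states: "x \<in> states S \<Longrightarrow> restrict x S = x"
  by (auto simp: states_iff restrict_def)

lemma merge_states: "x \<in> states S \<Longrightarrow> z \<in> states T \<Longrightarrow> T \<subseteq> S \<Longrightarrow> merge T x z \<in> states S"
  by (auto simp: states_iff merge_def)

lemma merge_states2: "x \<in> states (S - T) \<Longrightarrow> z \<in> states T \<Longrightarrow> T \<subseteq> S \<Longrightarrow> merge T x z \<in> states S"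
  by (auto simp: states_iff merge_def)

lemma merge_states3: "x \<in> states (S - T) \<Longrightarrow> z \<in> states T \<Longrightarrow> merge T x z \<in> states (S \<union> T)"
  by (auto simp: states_iff merge_def)

lemma restrict_merge_in[simp]: "z \<in> states T \<Longrightarrow> restrict (merge T x z) T = z"
  by (auto simp: states_iff merge_def restrict_def)

lemma restrict_merge_out: "U \<inter> T = {} \<Longrightarrow> restrict (merge T x z) U = restrict x U"
  by (auto simp: merge_def restrict_def fun_eq_iff)

lemma merge_merge_same[simp]: "merge T (merge T x w) a = merge T x a"
  by (auto simp: merge_def)

lemma merge_restrict_compl: "x \<in> states S \<Longrightarrow> merge T (restrict x (S - T)) z = merge T x z"
  by (auto simp: merge_def restrict_def states_iff)

lemma merge_app_in[simp]: "s \<in> T \<Longrightarrow> merge T x z s = z s"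
  by (simp add: merge_def)
lemma merge_app_out[simp]: "s \<notin> T \<Longrightarrow> merge T x z s = x s"
  by (simp add: merge_def)

lemma split_bij:
  assumes "T \<subseteq> S"
  shows "bij_betw (\<lambda>(u, w). merge T u w) (states (S - T) \<times> states T) (states S)"
proof (rule bij_betw_imageI)
  show "inj_on (\<lambda>(u, w). merge T u w) (states (S - T) \<times> states T)"
  proof (rule inj_onI, clarsimp)
    fix u w u' w'
    assume h: "u \<in> states (S - T)" "w \<in> states T" "u' \<in> states (S - T)" "w' \<in> states T"
      and e: "merge T u w = merge T u' w'"
    have "u = u'"
    proof
      fix s show "u s = u' s" using h fun_cong[OF e, of s]
        by (cases "s \<in> T") (auto simp: states_iff merge_def)
    qed
    moreover have "w = w'"
    proof
      fix s show "w s = w' s" using h fun_cong[OF e, of s]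
        by (cases "s \<in> T") (auto simp: states_iff merge_def)
    qed
    ultimately show "u = u' \<and> w = w'" by simp
  qed
  show "(\<lambda>(u, w). merge T u w) ` (states (S - T) \<times> states T) = states S"
  proof
    show "(\<lambda>(u, w). merge T u w) ` (states (S - T) \<times> states T) \<subseteq> states S"
      using assms by (auto intro: merge_states2)
    show "states S \<subseteq> (\<lambda>(u, w). merge T u w) ` (states (S - T) \<times> states T)"
    proof
      fix x assume x: "x \<in> states S"
      have "x = merge T (restrict x (S - T)) (restrict x T)"
        using x assms by (auto simp: merge_def restrict_def states_iff)
      then show "x \<in> (\<lambda>(u, w). merge T u w) ` (states (S - T) \<times> states T)"
        by (auto intro!: image_eqI[where x="(restrict x (S - T), restrict x T)"])
    qed
  qed
qed

lemma split_sum: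
  assumes "finite S" "T \<subseteq> S"
  shows "sum f (states S) = (\<Sum>u\<in>states (S - T). \<Sum>w\<in>states T. f (merge T u w))"
proof -
  have "sum f (states S) = sum (f \<circ> (\<lambda>(u, w). merge T u w)) (states (S - T) \<times> states T)"
    using sum.reindex_bij_betw[OF split_bij[OF assms(2)], of f] by simp
  also have "\<dots> = (\<Sum>u\<in>states (S - T). \<Sum>w\<in>states T. f (merge T u w))"
    by (subst sum.cartesian_product) (simp add: case_prod_beta)
  finally show ?thesis .
qed

lemma sum_states_delta:
  assumes "finite T"
  shows "(\<Sum>a\<in>states T. if (\<forall>s\<in>T. a s = y s) then f a else 0) = f (restrict y T)"
proof -
  have "\<And>a. a \<in> states T \<Longrightarrow> (\<forall>s\<in>T. a s = y s) \<longleftrightarrow> a = restrict y T"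
    by (auto simp: states_iff restrict_def fun_eq_iff)
  then have "(\<Sum>a\<in>states T. if (\<forall>s\<in>T. a s = y s) then f a else 0)
       = (\<Sum>a\<in>states T. if a = restrict y T then f a else 0)"
    by (intro sum.cong) auto
  also have "\<dots> = f (restrict y T)"
    using assms by (simp add: sum.delta' finite_states)
  finally show ?thesis .
qed


lemma opeq_refl[simp]: "opeq S A A" by (simp add: opeq_def)
lemma opeq_sym: "opeq S A B \<Longrightarrow> opeq S B A" by (simp add: opeq_def)
lemma opeq_trans[trans]: "opeq S A B \<Longrightarrow> opeq S B C \<Longrightarrow> opeq S A C" by (simp add: opeq_def)
lemma opeqD: "opeq S A B \<Longrightarrow> x \<in> states S \<Longrightarrow> y \<in> states S \<Longrightarrow> A x y = B x y"
  by (simp add: opeq_def)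

lemma opmul_cong: "opeq S A A' \<Longrightarrow> opeq S B B' \<Longrightarrow> opeq S (opmul S A B) (opmul S A' B')"
  by (simp add: opeq_def opmul_def)
lemma opmul_congL: "opeq S A A' \<Longrightarrow> opeq S (opmul S A B) (opmul S A' B)"
  by (simp add: opmul_cong)
lemma opmul_congR: "opeq S B B' \<Longrightarrow> opeq S (opmul S A B) (opmul S A B')"
  by (simp add: opmul_cong)

lemma opmul_assoc:
  assumes "finite S"
  shows "opeq S (opmul S (opmul S A B) C) (opmul S A (opmul S B C))"
  unfolding opeq_def opmul_def
  by (auto simp: sum_distrib_left sum_distrib_right mult.assoc intro: sum.swap)

lemma opmul_assoc':
  assumes "finite S"
  shows "opeq S (opmul S A (opmul S B C)) (opmul S (opmul S A B) C)"
  using opmul_assoc[OF assms] by (rule opeq_sym)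

lemma opmul_id_left:
  assumes "finite S" shows "opeq S (opmul S (opid S) A) A"
  unfolding opeq_def opmul_def opid_def
proof (intro ballI)
  fix x y :: "'a \<Rightarrow> 'b" assume x: "x \<in> states S"
  have "(\<Sum>z\<in>states S. (if x = z then 1 else 0) * A z y) = (\<Sum>z\<in>states S. if x = z then A z y else 0)"
    by (intro sum.cong) auto
  also have "\<dots> = A x y" using x assms by (simp add: finite_states)
  finally show "(\<Sum>z\<in>states S. (if x = z then 1 else 0) * A z y) = A x y" .
qed

lemma opmul_id_right:
  assumes "finite S" shows "opeq S (opmul S A (opid S)) A"
  unfolding opeq_def opmul_def opid_def
proof (intro ballI)
  fix x y :: "'a \<Rightarrow> 'b" assume y: "y \<in> states S"
  have "(\<Sum>z\<in>states S. A x z * (if z = y then 1 else 0)) = (\<Sum>z\<in>states S. if y = z then A x z else 0)"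
    by (intro sum.cong) auto
  also have "\<dots> = A x y" using y assms by (simp add: finite_states)
  finally show "(\<Sum>z\<in>states S. A x z * (if z = y then 1 else 0)) = A x y" .
qed

lemma opprod_Nil[simp]: "opprod S [] = opid S" by (simp add: opprod_def)
lemma opprod_Cons[simp]: "opprod S (A # As) = opmul S A (opprod S As)" by (simp add: opprod_def)

lemma opprod_append:
  assumes "finite S"
  shows "opeq S (opprod S (xs @ ys)) (opmul S (opprod S xs) (opprod S ys))"
proof (induction xs)
  case Nil then show ?case using opeq_sym[OF opmul_id_left[OF assms]] by simp
next
  case (Cons x xs)
  have "opeq S (opprod S ((x # xs) @ ys)) (opmul S x (opmul S (opprod S xs) (opprod S ys)))"
    using Cons by (simp add: opmul_congR)
  also have "opeq S \<dots> (opmul S (opprod S (x # xs)) (opprod S ys))"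
    using opmul_assoc'[OF assms] by simp
  finally show ?case .
qed

lemma opprod_cong:
  "list_all2 (opeq S) As Bs \<Longrightarrow> opeq S (opprod S As) (opprod S Bs)"
  by (induction As Bs rule: list_all2_induct) (auto intro: opmul_cong)

lemma opprod_map_cong:
  "(\<And>x. x \<in> set xs \<Longrightarrow> opeq S (f x) (g x)) \<Longrightarrow> opeq S (opprod S (map f xs)) (opprod S (map g xs))"
  by (rule opprod_cong) (auto simp: list_all2_conv_all_nth)

lemma opprod_single:
  assumes "finite S" shows "opeq S (opprod S [A]) A"
  using opmul_id_right[OF assms] by simp

lemma opmul_lift_left:
  assumes "finite S" "V \<subseteq> S" "x \<in> states S"
  shows "opmul S (lift S V A) B x y = (\<Sum>a\<in>states V. A (restrict x V) a * B (merge V x a) y)"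
proof -
  have "opmul S (lift S V A) B x y =
     (\<Sum>u\<in>states (S - V). \<Sum>a\<in>states V. lift S V A x (merge V u a) * B (merge V u a) y)"
    unfolding opmul_def by (rule split_sum[OF assms(1,2)])
  also have "\<dots> = (\<Sum>a\<in>states V. \<Sum>u\<in>states (S - V).
        if (\<forall>s\<in>S - V. u s = x s) then A (restrict x V) a * B (merge V u a) y else 0)"
    by (subst sum.swap) (intro sum.cong refl, auto simp: lift_def)
  also have "\<dots> = (\<Sum>a\<in>states V. A (restrict x V) a * B (merge V (restrict x (S - V)) a) y)"
    using assms by (subst sum_states_delta) (auto intro: finite_subset)
  also have "\<dots> = (\<Sum>a\<in>states V. A (restrict x V) a * B (merge V x a) y)"
    using assms by (simp add: merge_restrict_compl)
  finally show ?thesis .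
qed

lemma opmul_lift_right:
  assumes "finite S" "V \<subseteq> S" "y \<in> states S"
  shows "opmul S B (lift S V A) x y = (\<Sum>a\<in>states V. B x (merge V y a) * A a (restrict y V))"
proof -
  have "opmul S B (lift S V A) x y =
     (\<Sum>u\<in>states (S - V). \<Sum>a\<in>states V. B x (merge V u a) * lift S V A (merge V u a) y)"
    unfolding opmul_def by (rule split_sum[OF assms(1,2)])
  also have "\<dots> = (\<Sum>a\<in>states V. \<Sum>u\<in>states (S - V).
        if (\<forall>s\<in>S - V. u s = y s) then B x (merge V u a) * A a (restrict y V) else 0)"
    by (subst sum.swap) (intro sum.cong refl, auto simp: lift_def)
  also have "\<dots> = (\<Sum>a\<in>states V. B x (merge V (restrict y (S - V)) a) * A a (restrict y V))"
    using assms by (subst sum_states_delta) (auto intro: finite_subset)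
  also have "\<dots> = (\<Sum>a\<in>states V. B x (merge V y a) * A a (restrict y V))"
    using assms by (simp add: merge_restrict_compl)
  finally show ?thesis .
qed

lemma lift_mul:
  assumes "finite S" "T \<subseteq> S"
  shows "opeq S (opmul S (lift S T A) (lift S T B)) (lift S T (opmul T A B))"
  unfolding opeq_def
proof (intro ballI)
  fix x y :: "'a \<Rightarrow> 'b" assume x: "x \<in> states S" and y: "y \<in> states S"
  have "opmul S (lift S T A) (lift S T B) x y =
      (\<Sum>a\<in>states T. A (restrict x T) a * lift S T B (merge T x a) y)"
    by (rule opmul_lift_left[OF assms x])
  also have "\<dots> = (\<Sum>a\<in>states T. A (restrict x T) a * B a (restrict y T)) *
                   (if \<forall>s\<in>S - T. x s = y s then 1 else 0)"
    by (simp add: lift_def sum_distrib_right)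
  also have "\<dots> = lift S T (opmul T A B) x y"
    by (simp add: lift_def opmul_def)
  finally show "opmul S (lift S T A) (lift S T B) x y = lift S T (opmul T A B) x y" .
qed

lemma lift_id:
  assumes "T \<subseteq> S"
  shows "opeq S (lift S T (opid T)) (opid S)"
  unfolding opeq_def
proof (intro ballI)
  fix x y :: "'a \<Rightarrow> 'b" assume x: "x \<in> states S" and y: "y \<in> states S"
  have "(restrict x T = restrict y T \<and> (\<forall>s\<in>S - T. x s = y s)) \<longleftrightarrow> x = y"
  proof
    assume h: "restrict x T = restrict y T \<and> (\<forall>s\<in>S - T. x s = y s)"
    show "x = y"
    proof
      fix s
      have "restrict x T s = restrict y T s" using h by simp
      show "x s = y s"
      proof (cases "s \<in> T")
        case True then show ?thesis using \<open>restrict x T s = restrict y T s\<close> by simp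
      next
        case False then show ?thesis using h x y by (cases "s \<in> S") (auto simp: states_iff)
      qed
    qed
  qed simp
  then show "lift S T (opid T) x y = opid S x y"
    unfolding lift_def opid_def by auto
qed

lemma lift_self:
  shows "opeq S (lift S S A) A"
  unfolding opeq_def lift_def by (simp add: restrict_id_states)

lemma lift_lift:
  assumes "U \<subseteq> T" "T \<subseteq> S"
  shows "opeq S (lift S T (lift T U A)) (lift S U A)"
  unfolding opeq_def
proof (intro ballI)
  fix x y :: "'a \<Rightarrow> 'b" assume x: "x \<in> states S" and y: "y \<in> states S"
  have r: "restrict (restrict z T) U = restrict z U" for z :: "'a \<Rightarrow> 'b"
    using assms by (auto simp: restrict_def fun_eq_iff)
  have "((\<forall>s\<in>T - U. restrict x T s = restrict y T s) \<and> (\<forall>s\<in>S - T. x s = y s)) \<longleftrightarrow> (\<forall>s\<in>S - U. x s = y s)"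
    using assms by auto
  then show "lift S T (lift T U A) x y = lift S U A x y"
    unfolding lift_def r by auto
qed

lemma lift_cong:
  assumes "opeq T A B"
  shows "opeq S (lift S T A) (lift S T B)"
  using assms unfolding opeq_def lift_def by simp

lemma lift_tensor:
  assumes "finite S" "T \<subseteq> S" "U \<subseteq> S" "T \<inter> U = {}" "x \<in> states S" "y \<in> states S"
  shows "opmul S (lift S T A) (lift S U B) x y =
     A (restrict x T) (restrict y T) * B (restrict x U) (restrict y U) *
     (if \<forall>s\<in>S - (T \<union> U). x s = y s then 1 else 0)"
proof -
  have fT: "finite T" using assms finite_subset by blast
  have "opmul S (lift S T A) (lift S U B) x y =
      (\<Sum>a\<in>states T. A (restrict x T) a * lift S U B (merge T x a) y)"
    by (rule opmul_lift_left[OF assms(1,2,5)])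
  also have "\<dots> = (\<Sum>a\<in>states T. if (\<forall>s\<in>T. a s = y s) then
        A (restrict x T) a * (B (restrict x U) (restrict y U) *
       (if \<forall>s\<in>S - (T \<union> U). x s = y s then 1 else 0)) else 0)"
  proof (intro sum.cong refl)
    fix a :: "'a \<Rightarrow> 'b" assume a: "a \<in> states T"
    have r: "restrict (merge T x a) U = restrict x U"
      using assms(4) by (simp add: restrict_merge_out inf_commute)
    have "(\<forall>s\<in>S - U. merge T x a s = y s) \<longleftrightarrow> (\<forall>s\<in>T. a s = y s) \<and> (\<forall>s\<in>S - (T \<union> U). x s = y s)"
      using assms(2,4) by (auto simp: merge_def)
    then show "A (restrict x T) a * lift S U B (merge T x a) y = (if (\<forall>s\<in>T. a s = y s) then
        A (restrict x T) a * (B (restrict x U) (restrict y U) *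
       (if \<forall>s\<in>S - (T \<union> U). x s = y s then 1 else 0)) else 0)"
      by (simp add: lift_def r)
  qed
  also have "\<dots> = A (restrict x T) (restrict y T) * (B (restrict x U) (restrict y U) *
       (if \<forall>s\<in>S - (T \<union> U). x s = y s then 1 else 0))"
    by (rule sum_states_delta[OF fT])
  finally show ?thesis by (simp add: mult.assoc)
qed

lemma lift_commute:
  assumes "finite S" "T \<subseteq> S" "U \<subseteq> S" "T \<inter> U = {}"
  shows "opeq S (opmul S (lift S T A) (lift S U B)) (opmul S (lift S U B) (lift S T A))"
  unfolding opeq_def
proof (intro ballI)
  fix x y :: "'a \<Rightarrow> 'b" assume x: "x \<in> states S" and y: "y \<in> states S"
  have e1: "opmul S (lift S T A) (lift S U B) x y =
     A (restrict x T) (restrict y T) * B (restrict x U) (restrict y U) *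
     (if \<forall>s\<in>S - (T \<union> U). x s = y s then 1 else 0)"
    by (rule lift_tensor[OF assms x y])
  have e2: "opmul S (lift S U B) (lift S T A) x y =
     B (restrict x U) (restrict y U) * A (restrict x T) (restrict y T) *
     (if \<forall>s\<in>S - (U \<union> T). x s = y s then 1 else 0)"
    using assms(4) by (intro lift_tensor[OF assms(1,3,2) _ x y]) blast
  show "opmul S (lift S T A) (lift S U B) x y = opmul S (lift S U B) (lift S T A) x y"
    unfolding e1 e2 by (simp add: Un_commute)
qed

lemma lift_opprod:
  assumes "finite S" "T \<subseteq> S"
  shows "opeq S (lift S T (opprod T As)) (opprod S (map (lift S T) As))"
proof (induction As)
  case Nil then show ?case using lift_id[OF assms(2)] by simp
next
  case (Cons A As)
  have "opeq S (lift S T (opprod T (A # As))) (opmul S (lift S T A) (lift S T (opprod T As)))"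
    using lift_mul[OF assms, of A "opprod T As"] by (simp add: opeq_sym)
  also have "opeq S \<dots> (opprod S (map (lift S T) (A # As)))"
    using Cons by (simp add: opmul_congR)
  finally show ?case .
qed

lemma loc_as_lift: "loc S K a b c = lift S {a, b, c} (\<lambda>x y. K (x a, x b, x c) (y a, y b, y c))"
  by (simp add: loc_def)

lemma lift_loc:
  assumes "{a, b, c} \<subseteq> T" "T \<subseteq> S"
  shows "opeq S (lift S T (loc T K a b c)) (loc S K a b c)"
  unfolding loc_def by (rule lift_lift[OF assms])


lemma merge_comm: "V \<inter> T = {} \<Longrightarrow> merge V (merge T x w) a = merge T (merge V x a) w"
  by (auto simp: merge_def fun_eq_iff)

lemma ptrace_cong:
  assumes "T \<subseteq> S" "opeq S A B"
  shows "opeq (S - T) (ptrace S T A) (ptrace S T B)"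
  using assms unfolding opeq_def ptrace_def by (auto intro!: sum.cong merge_states2)

lemma ptrace_left:
  assumes "finite S" "T \<subseteq> S" "V \<subseteq> S - T"
  shows "opeq (S - T) (ptrace S T (opmul S (lift S V Y) A)) (opmul (S - T) (lift (S - T) V Y) (ptrace S T A))"
  unfolding opeq_def
proof (intro ballI)
  fix x y :: "'a \<Rightarrow> 'b" assume x: "x \<in> states (S - T)" and y: "y \<in> states (S - T)"
  have VT: "V \<inter> T = {}" "V \<subseteq> S" using assms by auto
  have "ptrace S T (opmul S (lift S V Y) A) x y =
     (\<Sum>w\<in>states T. \<Sum>a\<in>states V. Y (restrict x V) a * A (merge T (merge V x a) w) (merge T y w))"
    unfolding ptrace_def
  proof (intro sum.cong refl)
    fix w :: "'a \<Rightarrow> 'b" assume w: "w \<in> states T"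
    have m: "merge T x w \<in> states S" using merge_states2[OF x w assms(2)] .
    show "opmul S (lift S V Y) A (merge T x w) (merge T y w) =
        (\<Sum>a\<in>states V. Y (restrict x V) a * A (merge T (merge V x a) w) (merge T y w))"
      using VT by (simp add: opmul_lift_left[OF assms(1) VT(2) m] restrict_merge_out merge_comm)
  qed
  also have "\<dots> = (\<Sum>a\<in>states V. Y (restrict x V) a * ptrace S T A (merge V x a) y)"
    unfolding ptrace_def sum_distrib_left by (rule sum.swap)
  also have "\<dots> = opmul (S - T) (lift (S - T) V Y) (ptrace S T A) x y"
    using assms by (subst opmul_lift_left[OF _ assms(3) x]) auto
  finally show "ptrace S T (opmul S (lift S V Y) A) x y = opmul (S - T) (lift (S - T) V Y) (ptrace S T A) x y" .
qed

lemma ptrace_right: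
  assumes "finite S" "T \<subseteq> S" "V \<subseteq> S - T"
  shows "opeq (S - T) (ptrace S T (opmul S A (lift S V Y))) (opmul (S - T) (ptrace S T A) (lift (S - T) V Y))"
  unfolding opeq_def
proof (intro ballI)
  fix x y :: "'a \<Rightarrow> 'b" assume x: "x \<in> states (S - T)" and y: "y \<in> states (S - T)"
  have VT: "V \<inter> T = {}" "V \<subseteq> S" using assms by auto
  have "ptrace S T (opmul S A (lift S V Y)) x y =
     (\<Sum>w\<in>states T. \<Sum>a\<in>states V. A (merge T x w) (merge T (merge V y a) w) * Y a (restrict y V))"
    unfolding ptrace_def
  proof (intro sum.cong refl)
    fix w :: "'a \<Rightarrow> 'b" assume w: "w \<in> states T"
    have m: "merge T y w \<in> states S" using merge_states2[OF y w assms(2)] .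
    show "opmul S A (lift S V Y) (merge T x w) (merge T y w) =
        (\<Sum>a\<in>states V. A (merge T x w) (merge T (merge V y a) w) * Y a (restrict y V))"
      using VT by (simp add: opmul_lift_right[OF assms(1) VT(2) m] restrict_merge_out merge_comm)
  qed
  also have "\<dots> = (\<Sum>a\<in>states V. ptrace S T A x (merge V y a) * Y a (restrict y V))"
    unfolding ptrace_def sum_distrib_right by (rule sum.swap)
  also have "\<dots> = opmul (S - T) (ptrace S T A) (lift (S - T) V Y) x y"
    using assms by (subst opmul_lift_right[OF _ assms(3) y]) auto
  finally show "ptrace S T (opmul S A (lift S V Y)) x y = opmul (S - T) (ptrace S T A) (lift (S - T) V Y) x y" .
qed

lemma ptrace_stages:
  assumes "finite S" "T1 \<inter> T2 = {}" "T1 \<union> T2 \<subseteq> S"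
  shows "opeq (S - (T1 \<union> T2)) (ptrace S (T1 \<union> T2) A) (ptrace (S - T1) T2 (ptrace S T1 A))"
  unfolding opeq_def
proof (intro ballI)
  fix x y :: "'a \<Rightarrow> 'b" assume x: "x \<in> states (S - (T1 \<union> T2))" and y: "y \<in> states (S - (T1 \<union> T2))"
  have f: "finite (T1 \<union> T2)" using assms finite_subset by blast
  have e: "(T1 \<union> T2) - T1 = T2" using assms by auto
  have mm: "merge (T1 \<union> T2) z (merge T1 u w) = merge T1 (merge T2 z u) w" for z u w :: "'a \<Rightarrow> 'b"
    by (auto simp: merge_def fun_eq_iff)
  have "ptrace S (T1 \<union> T2) A x y =
     (\<Sum>u\<in>states T2. \<Sum>w\<in>states T1. A (merge T1 (merge T2 x u) w) (merge T1 (merge T2 y u) w))"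
    unfolding ptrace_def by (subst split_sum[OF f, of T1]) (auto simp: e mm)
  also have "\<dots> = ptrace (S - T1) T2 (ptrace S T1 A) x y"
    unfolding ptrace_def ..
  finally show "ptrace S (T1 \<union> T2) A x y = ptrace (S - T1) T2 (ptrace S T1 A) x y" .
qed

lemma ptrace_lift:
  assumes "T \<subseteq> U" "U \<subseteq> S"
  shows "opeq (S - T) (ptrace S T (lift S U X)) (lift (S - T) (U - T) (ptrace U T X))"
  unfolding opeq_def
proof (intro ballI)
  fix x y :: "'a \<Rightarrow> 'b" assume x: "x \<in> states (S - T)" and y: "y \<in> states (S - T)"
  have r: "restrict (merge T z w) U = merge T (restrict z (U - T)) w" for z w :: "'a \<Rightarrow> 'b"
    using assms by (auto simp: merge_def restrict_def fun_eq_iff)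
  have i: "(\<forall>s\<in>S - U. merge T x w s = merge T y w s) \<longleftrightarrow> (\<forall>s\<in>S - T - (U - T). x s = y s)" for w :: "'a \<Rightarrow> 'b"
    using assms by (auto simp: merge_def)
  show "ptrace S T (lift S U X) x y = lift (S - T) (U - T) (ptrace U T X) x y"
    unfolding ptrace_def lift_def r i by (simp add: sum_distrib_right)
qed

lemma ptrace_cyclic:
  assumes "finite S" "T \<subseteq> S"
  shows "opeq (S - T) (ptrace S T (opmul S (lift S T P) Y)) (ptrace S T (opmul S Y (lift S T P)))"
  unfolding opeq_def
proof (intro ballI)
  fix x y :: "'a \<Rightarrow> 'b" assume x: "x \<in> states (S - T)" and y: "y \<in> states (S - T)"
  have "ptrace S T (opmul S (lift S T P) Y) x y =
     (\<Sum>w\<in>states T. \<Sum>a\<in>states T. P w a * Y (merge T x a) (merge T y w))"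
    unfolding ptrace_def
  proof (intro sum.cong refl)
    fix w :: "'a \<Rightarrow> 'b" assume w: "w \<in> states T"
    have m: "merge T x w \<in> states S" using merge_states2[OF x w assms(2)] .
    show "opmul S (lift S T P) Y (merge T x w) (merge T y w) =
        (\<Sum>a\<in>states T. P w a * Y (merge T x a) (merge T y w))"
      using w by (simp add: opmul_lift_left[OF assms m])
  qed
  also have "\<dots> = (\<Sum>a\<in>states T. \<Sum>w\<in>states T. Y (merge T x w) (merge T y a) * P a w)"
    by (simp add: mult.commute)
  also have "\<dots> = (\<Sum>w\<in>states T. \<Sum>a\<in>states T. Y (merge T x w) (merge T y a) * P a w)"
    by (rule sum.swap)
  also have "\<dots> = ptrace S T (opmul S Y (lift S T P)) x y"
    unfolding ptrace_def
  proof (intro sum.cong refl)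
    fix w :: "'a \<Rightarrow> 'b" assume w: "w \<in> states T"
    have m: "merge T y w \<in> states S" using merge_states2[OF y w assms(2)] .
    show "(\<Sum>a\<in>states T. Y (merge T x w) (merge T y a) * P a w) =
        opmul S Y (lift S T P) (merge T x w) (merge T y w)"
      using w by (simp add: opmul_lift_right[OF assms m])
  qed
  finally show "ptrace S T (opmul S (lift S T P) Y) x y = ptrace S T (opmul S Y (lift S T P)) x y" .
qed

lemma mul_lifts_as_lift:
  assumes "finite S" "U1 \<subseteq> S" "U2 \<subseteq> S"
  shows "opeq S (opmul S (lift S U1 X1) (lift S U2 X2))
     (lift S (U1 \<union> U2) (opmul (U1 \<union> U2) (lift (U1 \<union> U2) U1 X1) (lift (U1 \<union> U2) U2 X2)))"
proof -
  have "opeq S (opmul S (lift S U1 X1) (lift S U2 X2))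
     (opmul S (lift S (U1 \<union> U2) (lift (U1 \<union> U2) U1 X1)) (lift S (U1 \<union> U2) (lift (U1 \<union> U2) U2 X2)))"
    using assms by (intro opmul_cong opeq_sym[OF lift_lift]) auto
  also have "opeq S \<dots> (lift S (U1 \<union> U2) (opmul (U1 \<union> U2) (lift (U1 \<union> U2) U1 X1) (lift (U1 \<union> U2) U2 X2)))"
    using assms by (intro lift_mul) auto
  finally show ?thesis .
qed

lemma trace2:
  assumes "finite S" "UA \<subseteq> S" "UB \<subseteq> S" "TA \<subseteq> UA" "TB \<subseteq> UB" "TA \<inter> UB = {}" "TB \<inter> UA = {}"
  shows "opeq (S - (TA \<union> TB)) (ptrace S (TA \<union> TB) (opmul S (lift S UA XA) (lift S UB XB)))
     (opmul (S - (TA \<union> TB)) (lift (S - (TA \<union> TB)) (UA - TA) (ptrace UA TA XA))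
                              (lift (S - (TA \<union> TB)) (UB - TB) (ptrace UB TB XB)))"
proof -
  have d: "TA \<inter> TB = {}" "TA \<union> TB \<subseteq> S" using assms by auto
  have e: "S - (TA \<union> TB) = S - TA - TB" by auto
  have f1: "finite (S - TA)" using assms by auto
  have "opeq (S - (TA \<union> TB)) (ptrace S (TA \<union> TB) (opmul S (lift S UA XA) (lift S UB XB)))
     (ptrace (S - TA) TB (ptrace S TA (opmul S (lift S UA XA) (lift S UB XB))))"
    by (rule ptrace_stages[OF assms(1) d])
  also have "opeq (S - (TA \<union> TB)) \<dots>
     (ptrace (S - TA) TB (opmul (S - TA) (ptrace S TA (lift S UA XA)) (lift (S - TA) UB XB)))"
    unfolding e using assms by (intro ptrace_cong ptrace_right) auto
  also have "opeq (S - (TA \<union> TB)) \<dots>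
     (ptrace (S - TA) TB (opmul (S - TA) (lift (S - TA) (UA - TA) (ptrace UA TA XA)) (lift (S - TA) UB XB)))"
    unfolding e using assms by (intro ptrace_cong opmul_cong ptrace_lift) auto
  also have "opeq (S - (TA \<union> TB)) \<dots>
     (opmul (S - TA - TB) (lift (S - TA - TB) (UA - TA) (ptrace UA TA XA)) (ptrace (S - TA) TB (lift (S - TA) UB XB)))"
    unfolding e using assms by (intro ptrace_left f1) auto
  also have "opeq (S - (TA \<union> TB)) \<dots>
     (opmul (S - TA - TB) (lift (S - TA - TB) (UA - TA) (ptrace UA TA XA)) (lift (S - TA - TB) (UB - TB) (ptrace UB TB XB)))"
    unfolding e using assms by (intro opmul_cong ptrace_lift) auto
  finally show ?thesis unfolding e .
qed


definition ren :: "'s set \<Rightarrow> ('s \<Rightarrow> 't) \<Rightarrow> ('s, 'b) kop \<Rightarrow> ('t, 'b) kop" where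
  "ren S g A x y = A (restrict (x \<circ> g) S) (restrict (y \<circ> g) S)"

lemma ren_bij:
  fixes g :: "'s \<Rightarrow> 't"
  assumes "inj_on g S"
  shows "bij_betw (\<lambda>x. restrict (x \<circ> g) S) (states (g ` S) :: ('t \<Rightarrow> 'v::finite) set) (states S)"
proof (rule bij_betw_imageI)
  show "inj_on (\<lambda>x. restrict (x \<circ> g) S) (states (g ` S) :: ('t \<Rightarrow> 'v) set)"
  proof (rule inj_onI)
    fix x y :: "'t \<Rightarrow> 'v" assume x: "x \<in> states (g ` S)" and y: "y \<in> states (g ` S)"
      and e: "restrict (x \<circ> g) S = restrict (y \<circ> g) S"
    show "x = y"
    proof
      fix t show "x t = y t"
      proof (cases "t \<in> g ` S")
        case True then obtain s where s: "s \<in> S" "t = g s" by auto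
        have "restrict (x \<circ> g) S s = restrict (y \<circ> g) S s" using e by simp
        then show ?thesis using s by simp
      next
        case False then show ?thesis using x y by (simp add: states_iff)
      qed
    qed
  qed
  show "(\<lambda>x. restrict (x \<circ> g) S) ` (states (g ` S) :: ('t \<Rightarrow> 'v) set) = states S"
  proof
    show "(\<lambda>x. restrict (x \<circ> g) S) ` (states (g ` S) :: ('t \<Rightarrow> 'v) set) \<subseteq> states S" by auto
    show "states S \<subseteq> (\<lambda>x. restrict (x \<circ> g) S) ` (states (g ` S) :: ('t \<Rightarrow> 'v) set)"
    proof
      fix z :: "'s \<Rightarrow> 'v" assume z: "z \<in> states S"
      have "z = restrict (restrict (z \<circ> the_inv_into S g) (g ` S) \<circ> g) S"
        using z assms by (auto simp: fun_eq_iff states_iff the_inv_into_f_f)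
      then show "z \<in> (\<lambda>x. restrict (x \<circ> g) S) ` (states (g ` S) :: ('t \<Rightarrow> 'v) set)"
        by (intro image_eqI[where x="restrict (z \<circ> the_inv_into S g) (g ` S)"]) auto
    qed
  qed
qed

lemma ren_cong:
  "opeq S A B \<Longrightarrow> opeq (g ` S) (ren S g A) (ren S g B)"
  unfolding opeq_def ren_def by simp

lemma ren_opmul:
  assumes "inj_on g S"
  shows "opeq (g ` S) (ren S g (opmul S A B)) (opmul (g ` S) (ren S g A) (ren S g B))"
  unfolding opeq_def
proof (intro ballI)
  fix x y :: "'b \<Rightarrow> 'c" assume x: "x \<in> states (g ` S)" and y: "y \<in> states (g ` S)"
  have "opmul (g ` S) (ren S g A) (ren S g B) x y =
     (\<Sum>z\<in>states (g ` S). (\<lambda>w. A (restrict (x \<circ> g) S) w * B w (restrict (y \<circ> g) S)) (restrict (z \<circ> g) S))"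
    unfolding opmul_def ren_def by simp
  also have "\<dots> = (\<Sum>w\<in>states S. A (restrict (x \<circ> g) S) w * B w (restrict (y \<circ> g) S))"
    by (rule sum.reindex_bij_betw[OF ren_bij[OF assms]])
  finally show "ren S g (opmul S A B) x y = opmul (g ` S) (ren S g A) (ren S g B) x y"
    unfolding ren_def opmul_def by simp
qed

lemma ren_opid:
  assumes "inj_on g S"
  shows "opeq (g ` S) (ren S g (opid S)) (opid (g ` S))"
  unfolding opeq_def
proof (intro ballI)
  fix x y :: "'b \<Rightarrow> 'c" assume x: "x \<in> states (g ` S)" and y: "y \<in> states (g ` S)"
  have "restrict (x \<circ> g) S = restrict (y \<circ> g) S \<longleftrightarrow> x = y"
    using bij_betw_imp_inj_on[OF ren_bij[OF assms]] x y by (auto dest: inj_onD)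
  then show "ren S g (opid S) x y = opid (g ` S) x y"
    unfolding ren_def opid_def by simp
qed

lemma ren_opprod:
  assumes "inj_on g S"
  shows "opeq (g ` S) (ren S g (opprod S As)) (opprod (g ` S) (map (ren S g) As))"
proof (induction As)
  case Nil then show ?case using ren_opid[OF assms] by simp
next
  case (Cons A As)
  have "opeq (g ` S) (ren S g (opprod S (A # As))) (opmul (g ` S) (ren S g A) (ren S g (opprod S As)))"
    using ren_opmul[OF assms] by simp
  also have "opeq (g ` S) \<dots> (opprod (g ` S) (map (ren S g) (A # As)))"
    using Cons by (simp add: opmul_congR)
  finally show ?case .
qed

lemma ren_lift:
  assumes "inj_on g S" "T \<subseteq> S"
  shows "opeq (g ` S) (ren S g (lift S T A)) (lift (g ` S) (g ` T) (ren T g A))"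
  unfolding opeq_def
proof (intro ballI)
  fix x y :: "'b \<Rightarrow> 'c" assume x: "x \<in> states (g ` S)" and y: "y \<in> states (g ` S)"
  have r1: "restrict (restrict (z \<circ> g) S) T = restrict (z \<circ> g) T" for z :: "'b \<Rightarrow> 'c"
    using assms by (auto simp: fun_eq_iff)
  have r2: "restrict (restrict z (g ` T) \<circ> g) T = restrict (z \<circ> g) T" for z :: "'b \<Rightarrow> 'c"
    by (auto simp: fun_eq_iff)
  have d: "g ` S - g ` T = g ` (S - T)"
    using assms by (simp add: inj_on_image_set_diff)
  have i: "(\<forall>s\<in>S - T. restrict (x \<circ> g) S s = restrict (y \<circ> g) S s) \<longleftrightarrow> (\<forall>t\<in>g ` S - g ` T. x t = y t)"
    unfolding d by auto
  show "ren S g (lift S T A) x y = lift (g ` S) (g ` T) (ren T g A) x y"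
    unfolding ren_def lift_def r1 r2 i ..
qed

lemma ren_loc:
  assumes "inj_on g S" "a \<in> S" "b \<in> S" "c \<in> S"
  shows "opeq (g ` S) (ren S g (loc S K a b c)) (loc (g ` S) K (g a) (g b) (g c))"
proof -
  have s: "{a, b, c} \<subseteq> S" using assms by auto
  have "opeq (g ` S) (ren S g (loc S K a b c))
     (lift (g ` S) (g ` {a, b, c}) (ren {a, b, c} g (\<lambda>x y. K (x a, x b, x c) (y a, y b, y c))))"
    unfolding loc_def by (rule ren_lift[OF assms(1) s])
  also have "opeq (g ` S) \<dots> (loc (g ` S) K (g a) (g b) (g c))"
    unfolding loc_def by (simp only: image_insert image_empty) (rule lift_cong, simp add: opeq_def ren_def)
  finally show ?thesis .
qed

lemma ren_ptrace:
  assumes "inj_on g S" "T \<subseteq> S"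
  shows "opeq (g ` S - g ` T) (ren (S - T) g (ptrace S T A)) (ptrace (g ` S) (g ` T) (ren S g A))"
  unfolding opeq_def
proof (intro ballI)
  fix x y :: "'b \<Rightarrow> 'c" assume x: "x \<in> states (g ` S - g ` T)" and y: "y \<in> states (g ` S - g ` T)"
  have injT: "inj_on g T" using assms inj_on_subset by blast
  have m: "restrict (merge (g ` T) z v \<circ> g) S = merge T (restrict (z \<circ> g) (S - T)) (restrict (v \<circ> g) T)"
    for z v :: "'b \<Rightarrow> 'c"
    using assms by (auto simp: fun_eq_iff merge_def inj_on_eq_iff)
  have "ptrace (g ` S) (g ` T) (ren S g A) x y =
     (\<Sum>v\<in>states (g ` T). (\<lambda>w. A (merge T (restrict (x \<circ> g) (S - T)) w) (merge T (restrict (y \<circ> g) (S - T)) w)) (restrict (v \<circ> g) T))"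
    unfolding ptrace_def ren_def m by simp
  also have "\<dots> = (\<Sum>w\<in>states T. A (merge T (restrict (x \<circ> g) (S - T)) w) (merge T (restrict (y \<circ> g) (S - T)) w))"
    by (rule sum.reindex_bij_betw[OF ren_bij[OF injT]])
  finally show "ren (S - T) g (ptrace S T A) x y = ptrace (g ` S) (g ` T) (ren S g A) x y"
    unfolding ren_def ptrace_def by simp
qed

lemma ren_id_on:
  assumes "\<And>s. s \<in> S \<Longrightarrow> g s = s"
  shows "opeq S (ren S g A) A"
  unfolding opeq_def ren_def
proof (intro ballI)
  fix x y :: "'a \<Rightarrow> 'b" assume x: "x \<in> states S" and y: "y \<in> states S"
  have "restrict (z \<circ> g) S = z" if "z \<in> states S" for z :: "'a \<Rightarrow> 'b"
    using assms that by (auto simp: fun_eq_iff states_iff)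
  then show "A (restrict (x \<circ> g) S) (restrict (y \<circ> g) S) = A x y" using x y by simp
qed


lemma opprod_snoc:
  assumes "finite S"
  shows "opeq S (opprod S (xs @ [x])) (opmul S (opprod S xs) x)"
proof -
  have "opeq S (opprod S (xs @ [x])) (opmul S (opprod S xs) (opprod S [x]))"
    by (rule opprod_append[OF assms(1)])
  also have "opeq S \<dots> (opmul S (opprod S xs) x)"
    by (rule opmul_congR[OF opprod_single[OF assms(1)]])
  finally show ?thesis .
qed

lemma upt_snoc1: "[1..<Suc n + 1] = [1..<n + 1] @ [Suc n]"
  by simp

lemma telescope:
  assumes "finite S"
    and h: "\<And>l. 1 \<le> l \<Longrightarrow> l \<le> n \<Longrightarrow>
      opeq S (opmul S (X l) (P (\<sigma> + of_nat (Suc l)))) (opmul S (P (\<sigma> + of_nat l)) (Y l))"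
  shows "opeq S (opmul S (opprod S (map X [1..<n+1])) (P (\<sigma> + of_nat (Suc n))))
                 (opmul S (P (\<sigma> + 1)) (opprod S (map Y [1..<n+1])))"
  using h
proof (induction n)
  case 0
  show ?case using opeq_trans[OF opmul_id_left[OF assms(1)] opeq_sym[OF opmul_id_right[OF assms(1)]]] by simp
next
  case (Suc n)
  let ?A = "opprod S (map X [1..<n+1])" and ?B = "opprod S (map Y [1..<n+1])"
  have IH: "opeq S (opmul S ?A (P (\<sigma> + of_nat (Suc n)))) (opmul S (P (\<sigma> + 1)) ?B)"
    using Suc.IH Suc.prems by simp
  have hn: "opeq S (opmul S (X (Suc n)) (P (\<sigma> + of_nat (Suc (Suc n))))) (opmul S (P (\<sigma> + of_nat (Suc n))) (Y (Suc n)))"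
    using Suc.prems[of "Suc n"] by simp
  have "opeq S (opmul S (opprod S (map X [1..<Suc n+1])) (P (\<sigma> + of_nat (Suc (Suc n)))))
      (opmul S (opmul S ?A (X (Suc n))) (P (\<sigma> + of_nat (Suc (Suc n)))))"
    unfolding upt_snoc1 map_append list.map by (rule opmul_congL[OF opprod_snoc[OF assms(1)]])
  also have "opeq S \<dots> (opmul S ?A (opmul S (X (Suc n)) (P (\<sigma> + of_nat (Suc (Suc n))))))"
    by (rule opmul_assoc[OF assms(1)])
  also have "opeq S \<dots> (opmul S ?A (opmul S (P (\<sigma> + of_nat (Suc n))) (Y (Suc n))))"
    by (rule opmul_congR[OF hn])
  also have "opeq S \<dots> (opmul S (opmul S ?A (P (\<sigma> + of_nat (Suc n)))) (Y (Suc n)))"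
    by (rule opmul_assoc'[OF assms(1)])
  also have "opeq S \<dots> (opmul S (opmul S (P (\<sigma> + 1)) ?B) (Y (Suc n)))"
    by (rule opmul_congL[OF IH])
  also have "opeq S \<dots> (opmul S (P (\<sigma> + 1)) (opmul S ?B (Y (Suc n))))"
    by (rule opmul_assoc[OF assms(1)])
  also have "opeq S \<dots> (opmul S (P (\<sigma> + 1)) (opprod S (map Y [1..<Suc n+1])))"
    unfolding upt_snoc1 map_append list.map by (rule opmul_congR[OF opeq_sym[OF opprod_snoc[OF assms(1)]]])
  finally show ?case .
qed

lemma commute_prod:
  assumes "finite S" "\<And>a. a \<in> set xs \<Longrightarrow> opeq S (opmul S a x) (opmul S x a)"
  shows "opeq S (opmul S (opprod S xs) x) (opmul S x (opprod S xs))"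
  using assms(2)
proof (induction xs)
  case Nil then show ?case
    using opeq_trans[OF opmul_id_left[OF assms(1)] opeq_sym[OF opmul_id_right[OF assms(1)]]] by simp
next
  case (Cons a xs)
  have "opeq S (opmul S (opprod S (a # xs)) x) (opmul S a (opmul S (opprod S xs) x))"
    using opmul_assoc[OF assms(1)] by simp
  also have "opeq S \<dots> (opmul S a (opmul S x (opprod S xs)))"
    using Cons by (intro opmul_congR) simp
  also have "opeq S \<dots> (opmul S (opmul S a x) (opprod S xs))"
    by (rule opmul_assoc'[OF assms(1)])
  also have "opeq S \<dots> (opmul S (opmul S x a) (opprod S xs))"
    using Cons by (intro opmul_congL) simp
  also have "opeq S \<dots> (opmul S x (opprod S (a # xs)))"
    using opmul_assoc[OF assms(1)] by simp
  finally show ?case .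
qed

lemma prod_split:
  assumes "finite S"
    and h: "\<And>i j. 1 \<le> i \<Longrightarrow> i < j \<Longrightarrow> j \<le> n \<Longrightarrow> opeq S (opmul S (b i) (a j)) (opmul S (a j) (b i))"
  shows "opeq S (opprod S (map (\<lambda>i. opmul S (a i) (b i)) [1..<n+1]))
                 (opmul S (opprod S (map a [1..<n+1])) (opprod S (map b [1..<n+1])))"
  using h
proof (induction n)
  case 0
  show ?case using opeq_sym[OF opmul_id_left[OF assms(1)]] by simp
next
  case (Suc n)
  let ?A = "opprod S (map a [1..<n+1])" and ?B = "opprod S (map b [1..<n+1])"
  let ?a = "a (Suc n)" and ?b = "b (Suc n)"
  have IH: "opeq S (opprod S (map (\<lambda>i. opmul S (a i) (b i)) [1..<n+1])) (opmul S ?A ?B)"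
    using Suc.IH Suc.prems by simp
  have cB: "opeq S (opmul S ?B ?a) (opmul S ?a ?B)"
    using Suc.prems by (intro commute_prod[OF assms(1)]) auto
  have "opeq S (opprod S (map (\<lambda>i. opmul S (a i) (b i)) [1..<Suc n+1]))
      (opmul S (opprod S (map (\<lambda>i. opmul S (a i) (b i)) [1..<n+1])) (opmul S ?a ?b))"
    unfolding upt_snoc1 map_append list.map by (rule opprod_snoc[OF assms(1)])
  also have "opeq S \<dots> (opmul S (opmul S ?A ?B) (opmul S ?a ?b))"
    by (rule opmul_congL[OF IH])
  also have "opeq S \<dots> (opmul S ?A (opmul S ?B (opmul S ?a ?b)))"
    by (rule opmul_assoc[OF assms(1)])
  also have "opeq S \<dots> (opmul S ?A (opmul S (opmul S ?B ?a) ?b))"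
    by (rule opmul_congR[OF opmul_assoc'[OF assms(1)]])
  also have "opeq S \<dots> (opmul S ?A (opmul S (opmul S ?a ?B) ?b))"
    by (rule opmul_congR[OF opmul_congL[OF cB]])
  also have "opeq S \<dots> (opmul S ?A (opmul S ?a (opmul S ?B ?b)))"
    by (rule opmul_congR[OF opmul_assoc[OF assms(1)]])
  also have "opeq S \<dots> (opmul S (opmul S ?A ?a) (opmul S ?B ?b))"
    by (rule opmul_assoc'[OF assms(1)])
  also have "opeq S \<dots> (opmul S (opprod S (map a [1..<Suc n+1])) (opprod S (map b [1..<Suc n+1])))"
    unfolding upt_snoc1 map_append list.map by (rule opmul_cong[OF opeq_sym[OF opprod_snoc[OF assms(1)]] opeq_sym[OF opprod_snoc[OF assms(1)]]])
  finally show ?case .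
qed

lemma opprod3:
  assumes "finite S"
  shows "opeq S (opprod S [A, B, C]) (opmul S A (opmul S B C))"
  by simp (intro opmul_congR opmul_id_right[OF assms(1)])

lemma bit_of_nat_double[simp]: "(of_nat (2 * L) :: bit) = 0"
  by simp


lemma lift_opprod_locs:
  assumes "finite S" "U \<subseteq> S" "\<And>x. x \<in> set xs \<Longrightarrow> {a x, b x, c x} \<subseteq> U"
  shows "opeq S (lift S U (opprod U (map (\<lambda>x. loc U (K x) (a x) (b x) (c x)) xs)))
                 (opprod S (map (\<lambda>x. loc S (K x) (a x) (b x) (c x)) xs))"
proof -
  have "opeq S (lift S U (opprod U (map (\<lambda>x. loc U (K x) (a x) (b x) (c x)) xs)))
      (opprod S (map (lift S U) (map (\<lambda>x. loc U (K x) (a x) (b x) (c x)) xs)))"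
    by (rule lift_opprod[OF assms(1,2)])
  also have "opeq S \<dots> (opprod S (map (\<lambda>x. loc S (K x) (a x) (b x) (c x)) xs))"
    unfolding map_map o_def using assms by (intro opprod_map_cong lift_loc) auto
  finally show ?thesis .
qed

lemma ren_opprod_locs:
  assumes "inj_on g S0" "\<And>x. x \<in> set xs \<Longrightarrow> {a x, b x, c x} \<subseteq> S0"
  shows "opeq (g ` S0) (ren S0 g (opprod S0 (map (\<lambda>x. loc S0 (K x) (a x) (b x) (c x)) xs)))
                 (opprod (g ` S0) (map (\<lambda>x. loc (g ` S0) (K x) (g (a x)) (g (b x)) (g (c x))) xs))"
proof -
  have "opeq (g ` S0) (ren S0 g (opprod S0 (map (\<lambda>x. loc S0 (K x) (a x) (b x) (c x)) xs)))
      (opprod (g ` S0) (map (ren S0 g) (map (\<lambda>x. loc S0 (K x) (a x) (b x) (c x)) xs)))"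
    by (rule ren_opprod[OF assms(1)])
  also have "opeq (g ` S0) \<dots> (opprod (g ` S0) (map (\<lambda>x. loc (g ` S0) (K x) (g (a x)) (g (b x)) (g (c x))) xs))"
    unfolding map_map o_def using assms by (intro opprod_map_cong ren_loc) auto
  finally show ?thesis .
qed

definition S6 :: "(nat \<times> nat) set" where
  "S6 = {(1, 2), (1, 3), (1, 4), (2, 3), (2, 4), (3, 4)}"

definition g6 :: "'s \<Rightarrow> 's \<Rightarrow> 's \<Rightarrow> 's \<Rightarrow> 's \<Rightarrow> 's \<Rightarrow> nat \<times> nat \<Rightarrow> 's" where
  "g6 s12 s13 s14 s23 s24 s34 p = (if p = (1, 2) then s12 else if p = (1, 3) then s13 else if p = (1, 4) then s14
      else if p = (2, 3) then s23 else if p = (2, 4) then s24 else s34)"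

lemma BTE_in:
  assumes bte: "BTE R R1 R2 R3 \<sigma>" and fin: "finite S"
    and sub: "{s12, s13, s14, s23, s24, s34} \<subseteq> S" and dist: "distinct [s12, s13, s14, s23, s24, s34]"
  shows "opeq S (opprod S [loc S (R \<sigma> p1 p2 p3) s12 s13 s23, loc S (R1 (\<sigma> + 1) p1 p2 p4) s12 s14 s24,
                           loc S (R2 \<sigma> p1 p3 p4) s13 s14 s34, loc S (R3 (\<sigma> + 1) p2 p3 p4) s23 s24 s34])
                (opprod S [loc S (R3 \<sigma> p2 p3 p4) s23 s24 s34, loc S (R2 (\<sigma> + 1) p1 p3 p4) s13 s14 s34,
                           loc S (R1 \<sigma> p1 p2 p4) s12 s14 s24, loc S (R (\<sigma> + 1) p1 p2 p3) s12 s13 s23])"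
proof -
  let ?g = "g6 s12 s13 s14 s23 s24 s34"
  let ?U = "{s12, s13, s14, s23, s24, s34}"
  have inj: "inj_on ?g S6"
    using dist unfolding inj_on_def S6_def g6_def by auto
  have img: "?g ` S6 = ?U"
    unfolding S6_def g6_def by auto
  define xs where "xs = [(R \<sigma> p1 p2 p3, (1::nat, 2::nat), (1::nat, 3::nat), (2::nat, 3::nat)),
     (R1 (\<sigma> + 1) p1 p2 p4, (1, 2), (1, 4), (2, 4)), (R2 \<sigma> p1 p3 p4, (1, 3), (1, 4), (3, 4)),
     (R3 (\<sigma> + 1) p2 p3 p4, (2, 3), (2, 4), (3, 4))]"
  define ys where "ys = [(R3 \<sigma> p2 p3 p4, (2::nat, 3::nat), (2::nat, 4::nat), (3::nat, 4::nat)),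
     (R2 (\<sigma> + 1) p1 p3 p4, (1, 3), (1, 4), (3, 4)), (R1 \<sigma> p1 p2 p4, (1, 2), (1, 4), (2, 4)),
     (R (\<sigma> + 1) p1 p2 p3, (1, 2), (1, 3), (2, 3))]"
  let ?f = "\<lambda>S' h x. loc S' (fst x) (h (fst (snd x))) (h (fst (snd (snd x)))) (h (snd (snd (snd x))))"
  have xin: "\<And>x. x \<in> set xs \<Longrightarrow> {fst (snd x), fst (snd (snd x)), snd (snd (snd x))} \<subseteq> S6"
    unfolding xs_def S6_def by auto
  have yin: "\<And>x. x \<in> set ys \<Longrightarrow> {fst (snd x), fst (snd (snd x)), snd (snd (snd x))} \<subseteq> S6"
    unfolding ys_def S6_def by auto
  have b0: "opeq S6 (opprod S6 (map (?f S6 id) xs)) (opprod S6 (map (?f S6 id) ys))"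
    using bte unfolding BTE_def Let_def S6_def xs_def ys_def by simp
  have "opeq (?g ` S6) (ren S6 ?g (opprod S6 (map (?f S6 id) xs))) (ren S6 ?g (opprod S6 (map (?f S6 id) ys)))"
    by (rule ren_cong[OF b0])
  moreover have "opeq (?g ` S6) (ren S6 ?g (opprod S6 (map (?f S6 id) xs))) (opprod (?g ` S6) (map (?f (?g ` S6) ?g) xs))"
    using ren_opprod_locs[OF inj xin] by simp
  moreover have "opeq (?g ` S6) (ren S6 ?g (opprod S6 (map (?f S6 id) ys))) (opprod (?g ` S6) (map (?f (?g ` S6) ?g) ys))"
    using ren_opprod_locs[OF inj yin] by simp
  ultimately have "opeq ?U (opprod ?U (map (?f ?U ?g) xs)) (opprod ?U (map (?f ?U ?g) ys))"
    unfolding img by (meson opeq_sym opeq_trans)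
  then have "opeq S (lift S ?U (opprod ?U (map (?f ?U ?g) xs))) (lift S ?U (opprod ?U (map (?f ?U ?g) ys)))"
    by (rule lift_cong)
  moreover have "opeq S (lift S ?U (opprod ?U (map (?f ?U ?g) xs))) (opprod S (map (?f S ?g) xs))"
    by (rule lift_opprod_locs[OF fin sub]) (auto simp: xs_def g6_def)
  moreover have "opeq S (lift S ?U (opprod ?U (map (?f ?U ?g) ys))) (opprod S (map (?f S ?g) ys))"
    by (rule lift_opprod_locs[OF fin sub]) (auto simp: ys_def g6_def)
  ultimately have "opeq S (opprod S (map (?f S ?g) xs)) (opprod S (map (?f S ?g) ys))"
    by (meson opeq_sym opeq_trans)
  then show ?thesis unfolding xs_def ys_def by (simp add: g6_def)
qed


lemma k3_in:
  assumes "k3_invertible K" "distinct [e1, e2, e3]"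
  shows "\<exists>Q0. opeq {e1, e2, e3} (opmul {e1, e2, e3} (loc {e1, e2, e3} K e1 e2 e3) Q0) (opid {e1, e2, e3}) \<and>
              opeq {e1, e2, e3} (opmul {e1, e2, e3} Q0 (loc {e1, e2, e3} K e1 e2 e3)) (opid {e1, e2, e3})"
proof -
  define S0 :: "(nat \<times> nat) set" where "S0 = {(1, 2), (1, 3), (2, 3)}"
  define g where "g p = (if p = (1::nat, 2::nat) then e1 else if p = (1, 3) then e2 else e3)" for p
  let ?E = "{e1, e2, e3}"
  have inj: "inj_on g S0" using assms(2) unfolding inj_on_def S0_def g_def by auto
  have img: "g ` S0 = ?E" unfolding S0_def g_def by auto
  obtain B where B1: "opeq S0 (opmul S0 (loc S0 K (1, 2) (1, 3) (2, 3)) B) (opid S0)"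
    and B2: "opeq S0 (opmul S0 B (loc S0 K (1, 2) (1, 3) (2, 3))) (opid S0)"
    using assms(1) unfolding k3_invertible_def op_invertible_def Let_def S0_def by blast
  have rl: "opeq (g ` S0) (ren S0 g (loc S0 K (1, 2) (1, 3) (2, 3))) (loc (g ` S0) K e1 e2 e3)"
    using ren_loc[OF inj, of "(1,2)" "(1,3)" "(2,3)" K] by (simp add: S0_def g_def)
  have "opeq (g ` S0) (opmul (g ` S0) (loc (g ` S0) K e1 e2 e3) (ren S0 g B))
      (opmul (g ` S0) (ren S0 g (loc S0 K (1, 2) (1, 3) (2, 3))) (ren S0 g B))"
    by (rule opmul_congL[OF opeq_sym[OF rl]])
  also have "opeq (g ` S0) \<dots> (ren S0 g (opmul S0 (loc S0 K (1, 2) (1, 3) (2, 3)) B))"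
    by (rule opeq_sym[OF ren_opmul[OF inj]])
  also have "opeq (g ` S0) \<dots> (ren S0 g (opid S0))" by (rule ren_cong[OF B1])
  also have "opeq (g ` S0) \<dots> (opid (g ` S0))" by (rule ren_opid[OF inj])
  finally have c1: "opeq (g ` S0) (opmul (g ` S0) (loc (g ` S0) K e1 e2 e3) (ren S0 g B)) (opid (g ` S0))" .
  have "opeq (g ` S0) (opmul (g ` S0) (ren S0 g B) (loc (g ` S0) K e1 e2 e3))
      (opmul (g ` S0) (ren S0 g B) (ren S0 g (loc S0 K (1, 2) (1, 3) (2, 3))))"
    by (rule opmul_congR[OF opeq_sym[OF rl]])
  also have "opeq (g ` S0) \<dots> (ren S0 g (opmul S0 B (loc S0 K (1, 2) (1, 3) (2, 3))))"
    by (rule opeq_sym[OF ren_opmul[OF inj]])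
  also have "opeq (g ` S0) \<dots> (ren S0 g (opid S0))" by (rule ren_cong[OF B2])
  also have "opeq (g ` S0) \<dots> (opid (g ` S0))" by (rule ren_opid[OF inj])
  finally have c2: "opeq (g ` S0) (opmul (g ` S0) (ren S0 g B) (loc (g ` S0) K e1 e2 e3)) (opid (g ` S0))" .
  show ?thesis using c1 c2 unfolding img by blast
qed

lemma conj_trace:
  assumes fin: "finite S" and E: "E \<subseteq> S"
    and i1: "opeq E (opmul E P0 Q0) (opid E)" and i2: "opeq E (opmul E Q0 P0) (opid E)"
    and h: "opeq S (opmul S X (lift S E P0)) (opmul S (lift S E P0) Y)"
  shows "opeq (S - E) (ptrace S E X) (ptrace S E Y)"
proof -
  have pq: "opeq S (opmul S (lift S E P0) (lift S E Q0)) (opid S)"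
    using opeq_trans[OF lift_mul[OF fin E] opeq_trans[OF lift_cong[OF i1] lift_id[OF E]]] .
  have qp: "opeq S (opmul S (lift S E Q0) (lift S E P0)) (opid S)"
    using opeq_trans[OF lift_mul[OF fin E] opeq_trans[OF lift_cong[OF i2] lift_id[OF E]]] .
  have "opeq S X (opmul S X (opid S))" by (rule opeq_sym[OF opmul_id_right[OF fin]])
  also have "opeq S \<dots> (opmul S X (opmul S (lift S E P0) (lift S E Q0)))"
    by (rule opmul_congR[OF opeq_sym[OF pq]])
  also have "opeq S \<dots> (opmul S (opmul S X (lift S E P0)) (lift S E Q0))"
    by (rule opmul_assoc'[OF fin])
  also have "opeq S \<dots> (opmul S (opmul S (lift S E P0) Y) (lift S E Q0))"
    by (rule opmul_congL[OF h])
  also have "opeq S \<dots> (opmul S (lift S E P0) (opmul S Y (lift S E Q0)))"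
    by (rule opmul_assoc[OF fin])
  finally have X: "opeq S X (opmul S (lift S E P0) (opmul S Y (lift S E Q0)))" .
  have "opeq (S - E) (ptrace S E X) (ptrace S E (opmul S (lift S E P0) (opmul S Y (lift S E Q0))))"
    by (rule ptrace_cong[OF E X])
  also have "opeq (S - E) \<dots> (ptrace S E (opmul S (opmul S Y (lift S E Q0)) (lift S E P0)))"
    by (rule ptrace_cyclic[OF fin E])
  also have "opeq (S - E) \<dots> (ptrace S E Y)"
  proof (rule ptrace_cong[OF E])
    have "opeq S (opmul S (opmul S Y (lift S E Q0)) (lift S E P0)) (opmul S Y (opmul S (lift S E Q0) (lift S E P0)))"
      by (rule opmul_assoc[OF fin])
    also have "opeq S \<dots> (opmul S Y (opid S))" by (rule opmul_congR[OF qp])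
    also have "opeq S \<dots> Y" by (rule opmul_id_right[OF fin])
    finally show "opeq S (opmul S (opmul S Y (lift S E Q0)) (lift S E P0)) Y" .
  qed
  finally show ?thesis .
qed

lemma commute_mul:
  assumes fin: "finite S"
    and h1: "opeq S (opmul S x a) (opmul S a x)" and h2: "opeq S (opmul S y a) (opmul S a y)"
  shows "opeq S (opmul S (opmul S x y) a) (opmul S a (opmul S x y))"
proof -
  have "opeq S (opmul S (opmul S x y) a) (opmul S x (opmul S y a))" by (rule opmul_assoc[OF fin])
  also have "opeq S \<dots> (opmul S x (opmul S a y))" by (rule opmul_congR[OF h2])
  also have "opeq S \<dots> (opmul S (opmul S x a) y)" by (rule opmul_assoc'[OF fin])
  also have "opeq S \<dots> (opmul S (opmul S a x) y)" by (rule opmul_congL[OF h1])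
  also have "opeq S \<dots> (opmul S a (opmul S x y))" by (rule opmul_assoc[OF fin])
  finally show ?thesis .
qed

lemma lift_mul_split:
  assumes "finite S" "U \<subseteq> S" "V1 \<subseteq> U" "V2 \<subseteq> U"
  shows "opeq S (lift S U (opmul U (lift U V1 X1) (lift U V2 X2))) (opmul S (lift S V1 X1) (lift S V2 X2))"
proof -
  have "opeq S (lift S U (opmul U (lift U V1 X1) (lift U V2 X2)))
     (opmul S (lift S U (lift U V1 X1)) (lift S U (lift U V2 X2)))"
    by (rule opeq_sym[OF lift_mul[OF assms(1,2)]])
  also have "opeq S \<dots> (opmul S (lift S V1 X1) (lift S V2 X2))"
    using assms by (intro opmul_cong lift_lift) auto
  finally show ?thesis .
qed

lemma trace3:
  assumes fin: "finite S" and sub: "UA \<subseteq> S" "UB \<subseteq> S" "UC \<subseteq> S"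
    and T: "TA \<subseteq> UA" "TB \<subseteq> UB" "TC \<subseteq> UC"
    and d: "TA \<inter> UB = {}" "TA \<inter> UC = {}" "TB \<inter> UA = {}" "TB \<inter> UC = {}" "TC \<inter> UA = {}" "TC \<inter> UB = {}"
  shows "opeq (S - (TA \<union> (TB \<union> TC)))
     (ptrace S (TA \<union> (TB \<union> TC)) (opmul S (lift S UA XA) (opmul S (lift S UB XB) (lift S UC XC))))
     (opmul (S - (TA \<union> (TB \<union> TC))) (lift (S - (TA \<union> (TB \<union> TC))) (UA - TA) (ptrace UA TA XA))
        (opmul (S - (TA \<union> (TB \<union> TC))) (lift (S - (TA \<union> (TB \<union> TC))) (UB - TB) (ptrace UB TB XB))
                                          (lift (S - (TA \<union> (TB \<union> TC))) (UC - TC) (ptrace UC TC XC))))"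
proof -
  let ?U = "UB \<union> UC" and ?T = "TB \<union> TC" and ?S' = "S - (TA \<union> (TB \<union> TC))"
  let ?Z = "opmul ?U (lift ?U UB XB) (lift ?U UC XC)"
  have fU: "finite ?U" using fin sub finite_subset by (metis le_sup_iff)
  have "opeq ?S' (ptrace S (TA \<union> ?T) (opmul S (lift S UA XA) (opmul S (lift S UB XB) (lift S UC XC))))
     (ptrace S (TA \<union> ?T) (opmul S (lift S UA XA) (lift S ?U ?Z)))"
    using sub T d by (intro ptrace_cong opmul_congR mul_lifts_as_lift fin) auto
  also have "opeq ?S' \<dots> (opmul ?S' (lift ?S' (UA - TA) (ptrace UA TA XA)) (lift ?S' (?U - ?T) (ptrace ?U ?T ?Z)))"
    using sub T d by (intro trace2 fin) auto
  also have "opeq ?S' \<dots> (opmul ?S' (lift ?S' (UA - TA) (ptrace UA TA XA))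
      (lift ?S' (?U - ?T) (opmul (?U - ?T) (lift (?U - ?T) (UB - TB) (ptrace UB TB XB)) (lift (?U - ?T) (UC - TC) (ptrace UC TC XC)))))"
    using sub T d by (intro opmul_congR lift_cong trace2 fU) auto
  also have "opeq ?S' \<dots> (opmul ?S' (lift ?S' (UA - TA) (ptrace UA TA XA))
      (opmul ?S' (lift ?S' (UB - TB) (ptrace UB TB XB)) (lift ?S' (UC - TC) (ptrace UC TC XC))))"
    using sub T d fin by (intro opmul_congR lift_mul_split) auto
  finally show ?thesis .
qed


lemma TS_iff: "x \<in> TS L \<alpha> \<beta> \<longleftrightarrow> (\<exists>l. 1 \<le> l \<and> l \<le> 2 * L \<and> (x = (One l, \<alpha>) \<or> x = (One l, \<beta>)))"
  by (auto simp: TS_def)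

lemma finite_TS[simp]: "finite (TS L \<alpha> \<beta>)"
proof -
  have "TS L \<alpha> \<beta> = (\<lambda>l. (One l, \<alpha>)) ` {1..2*L} \<union> (\<lambda>l. (One l, \<beta>)) ` {1..2*L}"
    by (auto simp: TS_def)
  then show ?thesis by simp
qed

lemma locs_commute:
  assumes "finite S" "{x1, x2, x3} \<subseteq> S" "{y1, y2, y3} \<subseteq> S" "{x1, x2, x3} \<inter> {y1, y2, y3} = {}"
  shows "opeq S (opmul S (loc S K x1 x2 x3) (loc S K' y1 y2 y3)) (opmul S (loc S K' y1 y2 y3) (loc S K x1 x2 x3))"
  unfolding loc_def by (rule lift_commute[OF assms])

lemma trred_unfold:
  "trred X L r1 \<sigma> \<alpha> \<beta> pa pb = ptrace (TS L \<alpha> \<beta> \<union> {(\<alpha>, \<beta>)}) {(\<alpha>, \<beta>)}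
     (opprod (TS L \<alpha> \<beta> \<union> {(\<alpha>, \<beta>)}) (map (\<lambda>l. loc (TS L \<alpha> \<beta> \<union> {(\<alpha>, \<beta>)}) (X (\<sigma> + of_nat l) (r1 l) pa pb)
        (One l, \<alpha>) (One l, \<beta>) (\<alpha>, \<beta>)) [1..<2*L+1]))"
  by (simp add: trred_def Let_def)

lemma star:
  fixes R R1 R2 R3 :: "bit \<Rightarrow> 'c \<Rightarrow> 'c \<Rightarrow> 'c \<Rightarrow> 'b::finite k3"
  assumes bte: "\<And>\<sigma>. BTE R R1 R2 R3 \<sigma>" and inv3: "\<And>\<sigma> p1 p2 p3. k3_invertible (R3 \<sigma> p1 p2 p3)"
  shows "opeq (TS L (Two m) Three \<union> TS L (Two m) Four \<union> TS L Three Four)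
    (opmul (TS L (Two m) Three \<union> TS L (Two m) Four \<union> TS L Three Four)
      (lift (TS L (Two m) Three \<union> TS L (Two m) Four \<union> TS L Three Four) (TS L (Two m) Three) (trred R L r1 \<sigma> (Two m) Three pa p3))
      (opmul (TS L (Two m) Three \<union> TS L (Two m) Four \<union> TS L Three Four)
        (lift (TS L (Two m) Three \<union> TS L (Two m) Four \<union> TS L Three Four) (TS L (Two m) Four) (trred R1 L r1 (\<sigma> + 1) (Two m) Four pa p4))
        (lift (TS L (Two m) Three \<union> TS L (Two m) Four \<union> TS L Three Four) (TS L Three Four) (trred R2 L r1 \<sigma> Three Four p3 p4))))
    (opmul (TS L (Two m) Three \<union> TS L (Two m) Four \<union> TS L Three Four)
      (lift (TS L (Two m) Three \<union> TS L (Two m) Four \<union> TS L Three Four) (TS L Three Four) (trred R2 L r1 (\<sigma> + 1) Three Four p3 p4))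
      (opmul (TS L (Two m) Three \<union> TS L (Two m) Four \<union> TS L Three Four)
        (lift (TS L (Two m) Three \<union> TS L (Two m) Four \<union> TS L Three Four) (TS L (Two m) Four) (trred R1 L r1 \<sigma> (Two m) Four pa p4))
        (lift (TS L (Two m) Three \<union> TS L (Two m) Four \<union> TS L Three Four) (TS L (Two m) Three) (trred R L r1 (\<sigma> + 1) (Two m) Three pa p3))))"
    (is "opeq ?S1 ?LHS ?RHS")
proof -
  define a where "a = Two m"
  define UA where "UA = TS L a Three \<union> {(a, Three)}"
  define UB where "UB = TS L a Four \<union> {(a, Four)}"
  define UC where "UC = TS L Three Four \<union> {(Three, Four)}"
  define E where "E = {(a, Three)} \<union> ({(a, Four)} \<union> {(Three, Four)})"
  define S where "S = UA \<union> UB \<union> UC"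
  define n where "n = 2 * L"
  have finS: "finite S" unfolding S_def UA_def UB_def UC_def by simp
  have SE: "S - E = ?S1"
    unfolding S_def E_def UA_def UB_def UC_def a_def by (auto simp: TS_iff)
  have ES: "E \<subseteq> S" unfolding S_def E_def UA_def UB_def UC_def by auto
  have subs: "UA \<subseteq> S" "UB \<subseteq> S" "UC \<subseteq> S" unfolding S_def by auto
  define A where "A l = loc S (R (\<sigma> + of_nat l) (r1 l) pa p3) (One l, a) (One l, Three) (a, Three)" for l
  define B where "B l = loc S (R1 (\<sigma> + 1 + of_nat l) (r1 l) pa p4) (One l, a) (One l, Four) (a, Four)" for l
  define C where "C l = loc S (R2 (\<sigma> + of_nat l) (r1 l) p3 p4) (One l, Three) (One l, Four) (Three, Four)" for l
  define A' where "A' l = loc S (R (\<sigma> + 1 + of_nat l) (r1 l) pa p3) (One l, a) (One l, Three) (a, Three)" for l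
  define B' where "B' l = loc S (R1 (\<sigma> + of_nat l) (r1 l) pa p4) (One l, a) (One l, Four) (a, Four)" for l
  define C' where "C' l = loc S (R2 (\<sigma> + 1 + of_nat l) (r1 l) p3 p4) (One l, Three) (One l, Four) (Three, Four)" for l
  define P where "P c = loc S (R3 c pa p3 p4) (a, Three) (a, Four) (Three, Four)" for c
  have h1: "opeq S (opmul S (opprod S [A l, B l, C l]) (P (\<sigma> + of_nat (Suc l))))
                   (opmul S (P (\<sigma> + of_nat l)) (opprod S [C' l, B' l, A' l]))"
    if l: "1 \<le> l" "l \<le> n" for l
  proof -
    have c1: "\<sigma> + of_nat l + 1 = \<sigma> + 1 + of_nat l" by (metis add.assoc add.commute)
    have c2: "\<sigma> + of_nat (Suc l) = \<sigma> + 1 + of_nat l" by (simp only: of_nat_Suc add.assoc)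
    have sub6: "{(One l, a), (One l, Three), (One l, Four), (a, Three), (a, Four), (Three, Four)} \<subseteq> S"
      using l unfolding S_def UA_def UB_def UC_def n_def by (auto simp: TS_iff)
    have dist6: "distinct [(One l, a), (One l, Three), (One l, Four), (a, Three), (a, Four), (Three, Four)]"
      unfolding a_def by simp
    have b: "opeq S (opprod S [A l, B l, C l, P (\<sigma> + of_nat (Suc l))])
                    (opprod S [P (\<sigma> + of_nat l), C' l, B' l, A' l])"
      using BTE_in[OF bte[of "\<sigma> + of_nat l"] finS sub6 dist6, of "r1 l" pa p3 p4]
      unfolding A_def B_def C_def A'_def B'_def C'_def P_def c1 c2 .
    have "opeq S (opmul S (opprod S [A l, B l, C l]) (P (\<sigma> + of_nat (Suc l))))
        (opprod S ([A l, B l, C l] @ [P (\<sigma> + of_nat (Suc l))]))"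
      by (rule opeq_sym[OF opprod_snoc[OF finS]])
    also have "opeq S \<dots> (opprod S [P (\<sigma> + of_nat l), C' l, B' l, A' l])"
      using b by simp
    finally show ?thesis by simp
  qed
  have h2: "opeq S (opmul S (opprod S (map (\<lambda>l. opprod S [A l, B l, C l]) [1..<n+1])) (P (\<sigma> + 1)))
                   (opmul S (P (\<sigma> + 1)) (opprod S (map (\<lambda>l. opprod S [C' l, B' l, A' l]) [1..<n+1])))"
  proof -
    have "\<sigma> + of_nat (Suc n) = \<sigma> + 1" unfolding n_def by simp
    then show ?thesis
      using telescope[OF finS, of n "\<lambda>l. opprod S [A l, B l, C l]" P \<sigma> "\<lambda>l. opprod S [C' l, B' l, A' l]"] h1
      by simp
  qed
  define P0 where "P0 = loc {(a, Three), (a, Four), (Three, Four)} (R3 (\<sigma> + 1) pa p3 p4) (a, Three) (a, Four) (Three, Four)"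
  have Eeq: "E = {(a, Three), (a, Four), (Three, Four)}" unfolding E_def by auto
  obtain Q0 where q1: "opeq E (opmul E P0 Q0) (opid E)" and q2: "opeq E (opmul E Q0 P0) (opid E)"
    using k3_in[OF inv3[of "\<sigma> + 1" pa p3 p4], of "(a, Three)" "(a, Four)" "(Three, Four)"]
    unfolding Eeq P0_def a_def by auto
  have PP0: "opeq S (P (\<sigma> + 1)) (lift S E P0)"
    unfolding P_def P0_def Eeq using ES unfolding Eeq by (intro opeq_sym[OF lift_loc]) auto
  have h3: "opeq S (opmul S (opprod S (map (\<lambda>l. opprod S [A l, B l, C l]) [1..<n+1])) (lift S E P0))
                   (opmul S (lift S E P0) (opprod S (map (\<lambda>l. opprod S [C' l, B' l, A' l]) [1..<n+1])))"
    using opeq_trans[OF opeq_trans[OF opmul_congR[OF opeq_sym[OF PP0]] h2] opmul_congL[OF PP0]] .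
  have tr: "opeq (S - E) (ptrace S E (opprod S (map (\<lambda>l. opprod S [A l, B l, C l]) [1..<n+1])))
                         (ptrace S E (opprod S (map (\<lambda>l. opprod S [C' l, B' l, A' l]) [1..<n+1])))"
    by (rule conj_trace[OF finS ES q1 q2 h3])
  have inS: "{(One l, a), (One l, Three), (a, Three)} \<subseteq> S"
              "{(One l, a), (One l, Four), (a, Four)} \<subseteq> S"
              "{(One l, Three), (One l, Four), (Three, Four)} \<subseteq> S"
    if "1 \<le> l" "l \<le> n" for l
    using that unfolding S_def UA_def UB_def UC_def n_def by (auto simp: TS_iff)
  have dj: "{(One i, a), (One i, Three), (a, Three)} \<inter> {(One j, a), (One j, Four), (a, Four)} = {}"
           "{(One i, a), (One i, Three), (a, Three)} \<inter> {(One j, Three), (One j, Four), (Three, Four)} = {}"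
           "{(One i, a), (One i, Four), (a, Four)} \<inter> {(One j, Three), (One j, Four), (Three, Four)} = {}"
           "{(One i, a), (One i, Four), (a, Four)} \<inter> {(One j, a), (One j, Three), (a, Three)} = {}"
           "{(One i, Three), (One i, Four), (Three, Four)} \<inter> {(One j, a), (One j, Three), (a, Three)} = {}"
           "{(One i, Three), (One i, Four), (Three, Four)} \<inter> {(One j, a), (One j, Four), (a, Four)} = {}"
    if "i \<noteq> j" for i j
    using that unfolding a_def by auto
  have h4: "opeq S (opprod S (map (\<lambda>l. opprod S [A l, B l, C l]) [1..<n+1]))
     (opmul S (opprod S (map A [1..<n+1])) (opmul S (opprod S (map B [1..<n+1])) (opprod S (map C [1..<n+1]))))"
  proof -
    have "opeq S (opprod S (map (\<lambda>l. opprod S [A l, B l, C l]) [1..<n+1]))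
        (opprod S (map (\<lambda>l. opmul S (A l) (opmul S (B l) (C l))) [1..<n+1]))"
      by (intro opprod_map_cong opprod3[OF finS])
    also have "opeq S \<dots> (opmul S (opprod S (map A [1..<n+1])) (opprod S (map (\<lambda>l. opmul S (B l) (C l)) [1..<n+1])))"
    proof (rule prod_split[OF finS])
      fix i j assume ij: "1 \<le> i" "i < j" "j \<le> n"
      show "opeq S (opmul S (opmul S (B i) (C i)) (A j)) (opmul S (A j) (opmul S (B i) (C i)))"
        unfolding A_def B_def C_def using ij inS[of i] inS[of j] dj[of i j]
        by (intro commute_mul[OF finS] locs_commute[OF finS]) auto
    qed
    also have "opeq S \<dots> (opmul S (opprod S (map A [1..<n+1])) (opmul S (opprod S (map B [1..<n+1])) (opprod S (map C [1..<n+1]))))"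
    proof (rule opmul_congR, rule prod_split[OF finS])
      fix i j assume ij: "1 \<le> i" "i < j" "j \<le> n"
      show "opeq S (opmul S (C i) (B j)) (opmul S (B j) (C i))"
        unfolding B_def C_def using ij inS[of i] inS[of j] dj[of i j]
        by (intro locs_commute[OF finS]) auto
    qed
    finally show ?thesis .
  qed
  have h5: "opeq S (opprod S (map (\<lambda>l. opprod S [C' l, B' l, A' l]) [1..<n+1]))
     (opmul S (opprod S (map C' [1..<n+1])) (opmul S (opprod S (map B' [1..<n+1])) (opprod S (map A' [1..<n+1]))))"
  proof -
    have "opeq S (opprod S (map (\<lambda>l. opprod S [C' l, B' l, A' l]) [1..<n+1]))
        (opprod S (map (\<lambda>l. opmul S (C' l) (opmul S (B' l) (A' l))) [1..<n+1]))"
      by (intro opprod_map_cong opprod3[OF finS])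
    also have "opeq S \<dots> (opmul S (opprod S (map C' [1..<n+1])) (opprod S (map (\<lambda>l. opmul S (B' l) (A' l)) [1..<n+1])))"
    proof (rule prod_split[OF finS])
      fix i j assume ij: "1 \<le> i" "i < j" "j \<le> n"
      show "opeq S (opmul S (opmul S (B' i) (A' i)) (C' j)) (opmul S (C' j) (opmul S (B' i) (A' i)))"
        unfolding A'_def B'_def C'_def using ij inS[of i] inS[of j] dj[of i j]
        by (intro commute_mul[OF finS] locs_commute[OF finS]) auto
    qed
    also have "opeq S \<dots> (opmul S (opprod S (map C' [1..<n+1])) (opmul S (opprod S (map B' [1..<n+1])) (opprod S (map A' [1..<n+1]))))"
    proof (rule opmul_congR, rule prod_split[OF finS])
      fix i j assume ij: "1 \<le> i" "i < j" "j \<le> n"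
      show "opeq S (opmul S (A' i) (B' j)) (opmul S (B' j) (A' i))"
        unfolding A'_def B'_def using ij inS[of i] inS[of j] dj[of i j]
        by (intro locs_commute[OF finS]) auto
    qed
    finally show ?thesis .
  qed
  define XA where "XA c = opprod UA (map (\<lambda>l. loc UA (R (c + of_nat l) (r1 l) pa p3) (One l, a) (One l, Three) (a, Three)) [1..<n+1])" for c
  define XB where "XB c = opprod UB (map (\<lambda>l. loc UB (R1 (c + of_nat l) (r1 l) pa p4) (One l, a) (One l, Four) (a, Four)) [1..<n+1])" for c
  define XC where "XC c = opprod UC (map (\<lambda>l. loc UC (R2 (c + of_nat l) (r1 l) p3 p4) (One l, Three) (One l, Four) (Three, Four)) [1..<n+1])" for c
  have inU: "{(One l, a), (One l, Three), (a, Three)} \<subseteq> UA"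
            "{(One l, a), (One l, Four), (a, Four)} \<subseteq> UB"
            "{(One l, Three), (One l, Four), (Three, Four)} \<subseteq> UC"
    if "l \<in> set [1..<n+1]" for l
    using that unfolding UA_def UB_def UC_def n_def a_def by (auto simp: TS_iff)
  have lA: "opeq S (opprod S (map (\<lambda>l. loc S (R (c + of_nat l) (r1 l) pa p3) (One l, a) (One l, Three) (a, Three)) [1..<n+1])) (lift S UA (XA c))" for c
    unfolding XA_def by (rule opeq_sym[OF lift_opprod_locs[OF finS subs(1)]]) (rule inU)
  have lB: "opeq S (opprod S (map (\<lambda>l. loc S (R1 (c + of_nat l) (r1 l) pa p4) (One l, a) (One l, Four) (a, Four)) [1..<n+1])) (lift S UB (XB c))" for c
    unfolding XB_def by (rule opeq_sym[OF lift_opprod_locs[OF finS subs(2)]]) (rule inU)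
  have lC: "opeq S (opprod S (map (\<lambda>l. loc S (R2 (c + of_nat l) (r1 l) p3 p4) (One l, Three) (One l, Four) (Three, Four)) [1..<n+1])) (lift S UC (XC c))" for c
    unfolding XC_def by (rule opeq_sym[OF lift_opprod_locs[OF finS subs(3)]]) (rule inU)
  have trA: "ptrace UA {(a, Three)} (XA c) = trred R L r1 c a Three pa p3" for c
    unfolding XA_def UA_def trred_unfold n_def ..
  have trB: "ptrace UB {(a, Four)} (XB c) = trred R1 L r1 c a Four pa p4" for c
    unfolding XB_def UB_def trred_unfold n_def ..
  have trC: "ptrace UC {(Three, Four)} (XC c) = trred R2 L r1 c Three Four p3 p4" for c
    unfolding XC_def UC_def trred_unfold n_def ..
  have dA: "UA - {(a, Three)} = TS L a Three" unfolding UA_def a_def by (auto simp: TS_iff)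
  have dB: "UB - {(a, Four)} = TS L a Four" unfolding UB_def a_def by (auto simp: TS_iff)
  have dC: "UC - {(Three, Four)} = TS L Three Four" unfolding UC_def by (auto simp: TS_iff)
  have djU: "{(a, Three)} \<inter> UB = {}" "{(a, Three)} \<inter> UC = {}" "{(a, Four)} \<inter> UA = {}" "{(a, Four)} \<inter> UC = {}"
     "{(Three, Four)} \<inter> UA = {}" "{(Three, Four)} \<inter> UB = {}" "{(a, Three)} \<subseteq> UA" "{(a, Four)} \<subseteq> UB" "{(Three, Four)} \<subseteq> UC"
    unfolding UA_def UB_def UC_def a_def by (auto simp: TS_iff)
  have SE': "S - E = ?S1" by (rule SE)
  have LHSeq: "opeq (S - E) (ptrace S E (opmul S (opprod S (map A [1..<n+1])) (opmul S (opprod S (map B [1..<n+1])) (opprod S (map C [1..<n+1]))))) ?LHS"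
  proof -
    have "opeq (S - E) (ptrace S E (opmul S (opprod S (map A [1..<n+1])) (opmul S (opprod S (map B [1..<n+1])) (opprod S (map C [1..<n+1])))))
       (ptrace S E (opmul S (lift S UA (XA \<sigma>)) (opmul S (lift S UB (XB (\<sigma> + 1))) (lift S UC (XC \<sigma>)))))"
      unfolding A_def B_def C_def by (intro ptrace_cong[OF ES] opmul_cong lA lB lC)
    also have "opeq (S - E) \<dots> (opmul (S - E) (lift (S - E) (UA - {(a, Three)}) (ptrace UA {(a, Three)} (XA \<sigma>)))
        (opmul (S - E) (lift (S - E) (UB - {(a, Four)}) (ptrace UB {(a, Four)} (XB (\<sigma> + 1))))
                       (lift (S - E) (UC - {(Three, Four)}) (ptrace UC {(Three, Four)} (XC \<sigma>)))))"
      unfolding E_def by (rule trace3[OF finS subs djU(7,8,9,1-6)])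
    finally show ?thesis by (simp only: a_def trA[unfolded a_def] trB[unfolded a_def] trC dA[unfolded a_def] dB[unfolded a_def] dC SE')
  qed
  have E2: "E = {(Three, Four)} \<union> ({(a, Four)} \<union> {(a, Three)})" unfolding E_def by auto
  have RHSeq: "opeq (S - E) (ptrace S E (opmul S (opprod S (map C' [1..<n+1])) (opmul S (opprod S (map B' [1..<n+1])) (opprod S (map A' [1..<n+1]))))) ?RHS"
  proof -
    have "opeq (S - E) (ptrace S E (opmul S (opprod S (map C' [1..<n+1])) (opmul S (opprod S (map B' [1..<n+1])) (opprod S (map A' [1..<n+1])))))
       (ptrace S E (opmul S (lift S UC (XC (\<sigma> + 1))) (opmul S (lift S UB (XB \<sigma>)) (lift S UA (XA (\<sigma> + 1))))))"
      unfolding A'_def B'_def C'_def by (intro ptrace_cong[OF ES] opmul_cong lA lB lC)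
    also have "opeq (S - E) \<dots> (opmul (S - E) (lift (S - E) (UC - {(Three, Four)}) (ptrace UC {(Three, Four)} (XC (\<sigma> + 1))))
        (opmul (S - E) (lift (S - E) (UB - {(a, Four)}) (ptrace UB {(a, Four)} (XB \<sigma>)))
                       (lift (S - E) (UA - {(a, Three)}) (ptrace UA {(a, Three)} (XA (\<sigma> + 1))))))"
      unfolding E2 by (rule trace3[OF finS subs(3,2,1) djU(9,8,7)]) (use djU in auto)
    finally show ?thesis by (simp only: a_def trA[unfolded a_def] trB[unfolded a_def] trC dA[unfolded a_def] dB[unfolded a_def] dC SE')
  qed
  have "opeq (S - E) ?LHS (ptrace S E (opprod S (map (\<lambda>l. opprod S [A l, B l, C l]) [1..<n+1])))"
    using opeq_sym[OF opeq_trans[OF ptrace_cong[OF ES h4] LHSeq]] .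
  also have "opeq (S - E) \<dots> (ptrace S E (opprod S (map (\<lambda>l. opprod S [C' l, B' l, A' l]) [1..<n+1])))"
    by (rule tr)
  also have "opeq (S - E) \<dots> ?RHS"
    using opeq_trans[OF ptrace_cong[OF ES h5] RHSeq] .
  finally show ?thesis unfolding SE' .
qed


fun swp :: "plane \<Rightarrow> plane" where
  "swp Three = Four" | "swp Four = Three" | "swp (One l) = One l" | "swp (Two m) = Two m"

definition sw :: "slot \<Rightarrow> slot" where "sw p = (swp (fst p), swp (snd p))"

lemma swp_swp[simp]: "swp (swp p) = p" by (cases p) auto
lemma sw_simp[simp]: "sw (p, q) = (swp p, swp q)" by (simp add: sw_def)
lemma inj_sw: "inj_on sw A"
  by (rule inj_onI) (metis prod.collapse sw_def swp_swp prod.inject)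

lemma TS_image: "TS L \<alpha> \<beta> = (\<lambda>l. (One l, \<alpha>)) ` {1..2*L} \<union> (\<lambda>l. (One l, \<beta>)) ` {1..2*L}"
  by (auto simp: TS_def)

lemma sw_TS: "sw ` TS L \<alpha> \<beta> = TS L (swp \<alpha>) (swp \<beta>)"
  unfolding TS_image image_Un image_image by simp

lemma sw_fix_W: "s \<in> Wslots L M \<Longrightarrow> sw s = s"
  unfolding Wslots_def by auto

lemma sw_W: "sw ` Wslots L M = Wslots L M"
proof -
  have "sw ` Wslots L M = id ` Wslots L M" by (rule image_cong) (auto simp: sw_fix_W)
  then show ?thesis by simp
qed

lemma T_image: "{(One l, x) | l. l \<in> {1..2*L}} = (\<lambda>l. (One l, x)) ` {1..2*L}"
  by auto

lemma sw_T4: "sw ` {(One l, Four) | l. l \<in> {1..2*L}} = {(One l, Three) | l. l \<in> {1..2*L}}"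
  unfolding T_image image_image by simp

lemma ren_trred:
  "opeq (TS L (Two m) Three) (ren (TS L (Two m) Four) sw (trred X L r1 c (Two m) Four pa pb)) (trred X L r1 c (Two m) Three pa pb)"
proof -
  let ?U4 = "TS L (Two m) Four \<union> {(Two m, Four)}" and ?U3 = "TS L (Two m) Three \<union> {(Two m, Three)}"
  have i1: "sw ` ?U4 = ?U3" by (simp add: sw_TS)
  have i2: "sw ` {(Two m, Four)} = {(Two m, Three)}" by simp
  have d4: "?U4 - {(Two m, Four)} = TS L (Two m) Four" by (auto simp: TS_iff)
  have d3: "?U3 - {(Two m, Three)} = TS L (Two m) Three" by (auto simp: TS_iff)
  have "opeq (sw ` ?U4 - sw ` {(Two m, Four)}) (ren (?U4 - {(Two m, Four)}) sw (ptrace ?U4 {(Two m, Four)}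
      (opprod ?U4 (map (\<lambda>l. loc ?U4 (X (c + of_nat l) (r1 l) pa pb) (One l, Two m) (One l, Four) (Two m, Four)) [1..<2*L+1]))))
     (ptrace (sw ` ?U4) (sw ` {(Two m, Four)}) (ren ?U4 sw
      (opprod ?U4 (map (\<lambda>l. loc ?U4 (X (c + of_nat l) (r1 l) pa pb) (One l, Two m) (One l, Four) (Two m, Four)) [1..<2*L+1]))))"
    by (rule ren_ptrace[OF inj_sw]) auto
  also have "opeq (sw ` ?U4 - sw ` {(Two m, Four)}) \<dots>
     (ptrace (sw ` ?U4) (sw ` {(Two m, Four)})
      (opprod (sw ` ?U4) (map (\<lambda>l. loc (sw ` ?U4) (X (c + of_nat l) (r1 l) pa pb) (sw (One l, Two m)) (sw (One l, Four)) (sw (Two m, Four))) [1..<2*L+1])))"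
    by (intro ptrace_cong ren_opprod_locs inj_sw) (auto simp: TS_iff)
  finally show ?thesis
    unfolding trred_unfold d4 i1 i2 d3 by simp
qed


lemma transfer_unfold:
  "transfer X L M r1 r2 \<sigma> r = ptrace (Wslots L M \<union> {(One l, Three) | l. l \<in> {1..2*L}}) {(One l, Three) | l. l \<in> {1..2*L}}
     (opprod (Wslots L M \<union> {(One l, Three) | l. l \<in> {1..2*L}})
       (map (\<lambda>m. lift (Wslots L M \<union> {(One l, Three) | l. l \<in> {1..2*L}}) (TS L (Two m) Three)
               (trred X L r1 (\<sigma> + of_nat m) (Two m) Three (r2 m) r)) [1..<2*M+1]))"
  by (simp add: transfer_def Let_def)

lemma finite_W[simp]: "finite (Wslots L M)"
proof -
  have "Wslots L M = (\<lambda>(l, m). (One l, Two m)) ` ({1..2*L} \<times> {1..2*M})"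
    by (auto simp: Wslots_def)
  then show ?thesis by simp
qed

lemma finite_T[simp]: "finite {(One l, x) | l. l \<in> {1..2*L}}"
  unfolding T_image by simp

lemma TS_sub_W:
  assumes "m \<in> set [1..<2*M+1]"
  shows "TS L (Two m) x \<subseteq> Wslots L M \<union> {(One l, x) | l. l \<in> {1..2*L}}"
  using assms by (auto simp: TS_def Wslots_def)

lemma lift_opprod_lifts:
  assumes "finite S" "U \<subseteq> S" "\<And>x. x \<in> set xs \<Longrightarrow> V x \<subseteq> U"
  shows "opeq S (lift S U (opprod U (map (\<lambda>x. lift U (V x) (F x)) xs))) (opprod S (map (\<lambda>x. lift S (V x) (F x)) xs))"
proof -
  have "opeq S (lift S U (opprod U (map (\<lambda>x. lift U (V x) (F x)) xs)))
      (opprod S (map (lift S U) (map (\<lambda>x. lift U (V x) (F x)) xs)))"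
    by (rule lift_opprod[OF assms(1,2)])
  also have "opeq S \<dots> (opprod S (map (\<lambda>x. lift S (V x) (F x)) xs))"
    unfolding map_map o_def using assms by (intro opprod_map_cong lift_lift) auto
  finally show ?thesis .
qed

lemma four_three:
  "opeq (Wslots L M) (ptrace (Wslots L M \<union> {(One l, Four) | l. l \<in> {1..2*L}}) {(One l, Four) | l. l \<in> {1..2*L}}
     (opprod (Wslots L M \<union> {(One l, Four) | l. l \<in> {1..2*L}})
       (map (\<lambda>m. lift (Wslots L M \<union> {(One l, Four) | l. l \<in> {1..2*L}}) (TS L (Two m) Four)
               (trred X L r1 (c + of_nat m) (Two m) Four (r2 m) p)) [1..<2*M+1])))
     (transfer X L M r1 r2 c p)"
proof -
  let ?W = "Wslots L M" and ?T4 = "{(One l, Four) | l. l \<in> {1..2*L}}" and ?T3 = "{(One l, Three) | l. l \<in> {1..2*L}}"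
  let ?Z = "opprod (?W \<union> ?T4) (map (\<lambda>m. lift (?W \<union> ?T4) (TS L (Two m) Four)
               (trred X L r1 (c + of_nat m) (Two m) Four (r2 m) p)) [1..<2*M+1])"
  have d4: "(?W \<union> ?T4) - ?T4 = ?W" by (auto simp: Wslots_def)
  have d3: "(?W \<union> ?T3) - ?T3 = ?W" by (auto simp: Wslots_def)
  have im: "sw ` (?W \<union> ?T4) = ?W \<union> ?T3" by (simp only: image_Un sw_W sw_T4)
  have "opeq ?W (ptrace (?W \<union> ?T4) ?T4 ?Z) (ren ?W sw (ptrace (?W \<union> ?T4) ?T4 ?Z))"
    by (rule opeq_sym[OF ren_id_on]) (rule sw_fix_W)
  also have "opeq ?W \<dots> (ptrace (sw ` (?W \<union> ?T4)) (sw ` ?T4) (ren (?W \<union> ?T4) sw ?Z))"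
    using ren_ptrace[OF inj_sw, of ?T4 "?W \<union> ?T4" ?Z] unfolding d4 im sw_T4 d3 by simp
  also have "opeq ?W \<dots> (transfer X L M r1 r2 c p)"
  proof -
    have "opeq (sw ` (?W \<union> ?T4)) (ren (?W \<union> ?T4) sw ?Z) (opprod (sw ` (?W \<union> ?T4)) (map (ren (?W \<union> ?T4) sw)
       (map (\<lambda>m. lift (?W \<union> ?T4) (TS L (Two m) Four) (trred X L r1 (c + of_nat m) (Two m) Four (r2 m) p)) [1..<2*M+1])))"
      by (rule ren_opprod[OF inj_sw])
    also have "opeq (sw ` (?W \<union> ?T4)) \<dots> (opprod (sw ` (?W \<union> ?T4)) (map (\<lambda>m. lift (?W \<union> ?T3) (TS L (Two m) Three)
               (trred X L r1 (c + of_nat m) (Two m) Three (r2 m) p)) [1..<2*M+1]))"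
      unfolding map_map o_def
    proof (rule opprod_map_cong)
      fix m assume m: "m \<in> set [1..<2*M+1]"
      have "opeq (sw ` (?W \<union> ?T4)) (ren (?W \<union> ?T4) sw (lift (?W \<union> ?T4) (TS L (Two m) Four) (trred X L r1 (c + of_nat m) (Two m) Four (r2 m) p)))
         (lift (sw ` (?W \<union> ?T4)) (sw ` TS L (Two m) Four) (ren (TS L (Two m) Four) sw (trred X L r1 (c + of_nat m) (Two m) Four (r2 m) p)))"
        by (rule ren_lift[OF inj_sw TS_sub_W[OF m]])
      also have "opeq (sw ` (?W \<union> ?T4)) \<dots> (lift (?W \<union> ?T3) (TS L (Two m) Three) (trred X L r1 (c + of_nat m) (Two m) Three (r2 m) p))"
        unfolding sw_TS im by (simp add: lift_cong ren_trred)
      finally show "opeq (sw ` (?W \<union> ?T4)) (ren (?W \<union> ?T4) sw (lift (?W \<union> ?T4) (TS L (Two m) Four) (trred X L r1 (c + of_nat m) (Two m) Four (r2 m) p)))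
         (lift (?W \<union> ?T3) (TS L (Two m) Three) (trred X L r1 (c + of_nat m) (Two m) Three (r2 m) p))" .
    qed
    finally have inner: "opeq (?W \<union> ?T3) (ren (?W \<union> ?T4) sw ?Z) (opprod (?W \<union> ?T3) (map (\<lambda>m. lift (?W \<union> ?T3) (TS L (Two m) Three)
               (trred X L r1 (c + of_nat m) (Two m) Three (r2 m) p)) [1..<2*M+1]))" unfolding im .
    have sub: "?T3 \<subseteq> ?W \<union> ?T3" by auto
    show ?thesis unfolding im sw_T4 transfer_unfold using ptrace_cong[OF sub inner] unfolding d3 .
  qed
  finally show ?thesis .
qed


lemma bit_add_twice: "(x::bit) + 1 + 1 = x"
  by (cases x) simp_all

lemma lift_mul3:
  assumes "finite S" "U \<subseteq> S" "V1 \<subseteq> U" "V2 \<subseteq> U" "V3 \<subseteq> U"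
  shows "opeq S (lift S U (opmul U (lift U V1 X1) (opmul U (lift U V2 X2) (lift U V3 X3))))
                 (opmul S (lift S V1 X1) (opmul S (lift S V2 X2) (lift S V3 X3)))"
proof -
  have "opeq S (lift S U (opmul U (lift U V1 X1) (opmul U (lift U V2 X2) (lift U V3 X3))))
      (opmul S (lift S U (lift U V1 X1)) (lift S U (opmul U (lift U V2 X2) (lift U V3 X3))))"
    by (rule opeq_sym[OF lift_mul[OF assms(1,2)]])
  also have "opeq S \<dots> (opmul S (lift S V1 X1) (opmul S (lift S V2 X2) (lift S V3 X3)))"
    using assms by (intro opmul_cong lift_lift lift_mul_split) auto
  finally show ?thesis .
qed

lemma transfer_rel:
  fixes R R1 R2 R3 :: "bit \<Rightarrow> 'c \<Rightarrow> 'c \<Rightarrow> 'c \<Rightarrow> 'b::finite k3"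
  assumes bte: "\<And>\<sigma>. BTE R R1 R2 R3 \<sigma>" and inv3: "\<And>\<sigma> p1 p2 p3. k3_invertible (R3 \<sigma> p1 p2 p3)"
    and invtr: "\<And>\<sigma> p3 p4. op_invertible (TS L Three Four) (trred R2 L r1 \<sigma> Three Four p3 p4)"
  shows "opeq (Wslots L M) (opmul (Wslots L M) (transfer R L M r1 r2 \<sigma> p3) (transfer R1 L M r1 r2 (\<sigma> + 1) p4))
                           (opmul (Wslots L M) (transfer R1 L M r1 r2 \<sigma> p4) (transfer R L M r1 r2 (\<sigma> + 1) p3))"
proof -
  define W where "W = Wslots L M"
  define T3 where "T3 = {(One l, Three) | l. l \<in> {1..2*L}}"
  define T4 where "T4 = {(One l, Four) | l. l \<in> {1..2*L}}"
  define E where "E = TS L Three Four"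
  define S where "S = W \<union> E"
  define n where "n = 2 * M"
  have finS: "finite S" unfolding S_def W_def E_def by simp
  have ES: "E \<subseteq> S" unfolding S_def by auto
  have E34: "E = T3 \<union> T4" "E = T4 \<union> T3" unfolding E_def T3_def T4_def TS_def by auto
  have SE: "S - E = W" unfolding S_def E_def W_def by (auto simp: TS_iff Wslots_def)
  have TSsub: "TS L (Two m) Three \<subseteq> S" "TS L (Two m) Four \<subseteq> S" "TS L (Two m) Three \<subseteq> W \<union> T3" "TS L (Two m) Four \<subseteq> W \<union> T4"
    if "1 \<le> m" "m \<le> n" for m
    using that unfolding S_def W_def E_def T3_def T4_def n_def by (auto simp: TS_iff Wslots_def)
  define a where "a m = lift S (TS L (Two m) Three) (trred R L r1 (\<sigma> + of_nat m) (Two m) Three (r2 m) p3)" for m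
  define b where "b m = lift S (TS L (Two m) Four) (trred R1 L r1 (\<sigma> + 1 + of_nat m) (Two m) Four (r2 m) p4)" for m
  define b' where "b' m = lift S (TS L (Two m) Four) (trred R1 L r1 (\<sigma> + of_nat m) (Two m) Four (r2 m) p4)" for m
  define a' where "a' m = lift S (TS L (Two m) Three) (trred R L r1 (\<sigma> + 1 + of_nat m) (Two m) Three (r2 m) p3)" for m
  define D where "D c = lift S E (trred R2 L r1 c Three Four p3 p4)" for c
  have h1: "opeq S (opmul S (opmul S (a m) (b m)) (D (\<sigma> + of_nat m + 1 + 1)))
                   (opmul S (D (\<sigma> + of_nat m + 1)) (opmul S (b' m) (a' m)))"
    if m: "1 \<le> m" "m \<le> n" for m
  proof -
    let ?S1 = "TS L (Two m) Three \<union> TS L (Two m) Four \<union> TS L Three Four"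
    have c1: "\<sigma> + of_nat m + 1 = \<sigma> + 1 + of_nat m" by (metis add.assoc add.commute)
    have S1S: "?S1 \<subseteq> S" using TSsub[OF m] ES unfolding E_def by auto
    have st: "opeq ?S1
      (opmul ?S1 (lift ?S1 (TS L (Two m) Three) (trred R L r1 (\<sigma> + of_nat m) (Two m) Three (r2 m) p3))
        (opmul ?S1 (lift ?S1 (TS L (Two m) Four) (trred R1 L r1 (\<sigma> + 1 + of_nat m) (Two m) Four (r2 m) p4))
          (lift ?S1 (TS L Three Four) (trred R2 L r1 (\<sigma> + of_nat m) Three Four p3 p4))))
      (opmul ?S1 (lift ?S1 (TS L Three Four) (trred R2 L r1 (\<sigma> + of_nat m + 1) Three Four p3 p4))
        (opmul ?S1 (lift ?S1 (TS L (Two m) Four) (trred R1 L r1 (\<sigma> + of_nat m) (Two m) Four (r2 m) p4))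
          (lift ?S1 (TS L (Two m) Three) (trred R L r1 (\<sigma> + 1 + of_nat m) (Two m) Three (r2 m) p3))))"
      using star[OF bte inv3, of L m r1 "\<sigma> + of_nat m" "r2 m" p3 p4] unfolding c1 .
    have "opeq S (opmul S (a m) (opmul S (b m) (D (\<sigma> + of_nat m))))
        (opmul S (D (\<sigma> + of_nat m + 1)) (opmul S (b' m) (a' m)))"
    proof -
      have "opeq S (opmul S (a m) (opmul S (b m) (D (\<sigma> + of_nat m))))
         (lift S ?S1 (opmul ?S1 (lift ?S1 (TS L (Two m) Three) (trred R L r1 (\<sigma> + of_nat m) (Two m) Three (r2 m) p3))
        (opmul ?S1 (lift ?S1 (TS L (Two m) Four) (trred R1 L r1 (\<sigma> + 1 + of_nat m) (Two m) Four (r2 m) p4))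
          (lift ?S1 (TS L Three Four) (trred R2 L r1 (\<sigma> + of_nat m) Three Four p3 p4)))))"
        unfolding a_def b_def D_def E_def by (rule opeq_sym[OF lift_mul3[OF finS S1S]]) auto
      also have "opeq S \<dots> (lift S ?S1 (opmul ?S1 (lift ?S1 (TS L Three Four) (trred R2 L r1 (\<sigma> + of_nat m + 1) Three Four p3 p4))
        (opmul ?S1 (lift ?S1 (TS L (Two m) Four) (trred R1 L r1 (\<sigma> + of_nat m) (Two m) Four (r2 m) p4))
          (lift ?S1 (TS L (Two m) Three) (trred R L r1 (\<sigma> + 1 + of_nat m) (Two m) Three (r2 m) p3)))))"
        by (rule lift_cong[OF st])
      also have "opeq S \<dots> (opmul S (D (\<sigma> + of_nat m + 1)) (opmul S (b' m) (a' m)))"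
        unfolding a'_def b'_def D_def E_def by (rule lift_mul3[OF finS S1S]) auto
      finally show ?thesis .
    qed
    then show ?thesis
      using opeq_trans[OF opmul_assoc[OF finS]] unfolding bit_add_twice by blast
  qed
  have h2: "opeq S (opmul S (opprod S (map (\<lambda>m. opmul S (a m) (b m)) [1..<n+1])) (D \<sigma>))
                   (opmul S (D \<sigma>) (opprod S (map (\<lambda>m. opmul S (b' m) (a' m)) [1..<n+1])))"
  proof -
    have t: "opeq S (opmul S (opprod S (map (\<lambda>m. opmul S (a m) (b m)) [1..<n+1])) ((\<lambda>c. D (c + 1)) (\<sigma> + of_nat (Suc n))))
                 (opmul S ((\<lambda>c. D (c + 1)) (\<sigma> + 1)) (opprod S (map (\<lambda>m. opmul S (b' m) (a' m)) [1..<n+1])))"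
    proof (rule telescope[OF finS])
      fix l assume l: "1 \<le> l" "l \<le> n"
      have e: "\<sigma> + of_nat (Suc l) + 1 = \<sigma> + of_nat l + 1 + 1" by (simp only: of_nat_Suc ac_simps)
      show "opeq S (opmul S (opmul S (a l) (b l)) ((\<lambda>c. D (c + 1)) (\<sigma> + of_nat (Suc l))))
            (opmul S ((\<lambda>c. D (c + 1)) (\<sigma> + of_nat l)) (opmul S (b' l) (a' l)))"
        using h1[OF l] unfolding e by simp
    qed
    have e1: "\<sigma> + of_nat (Suc n) + 1 = \<sigma>" unfolding n_def
      by (metis bit_add_twice bit_of_nat_double add_0_right of_nat_Suc add.assoc add.commute)
    show ?thesis using t unfolding e1 bit_add_twice by simp
  qed
  obtain Q0 where q1: "opeq E (opmul E (trred R2 L r1 \<sigma> Three Four p3 p4) Q0) (opid E)"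
    and q2: "opeq E (opmul E Q0 (trred R2 L r1 \<sigma> Three Four p3 p4)) (opid E)"
    using invtr[of \<sigma> p3 p4] unfolding op_invertible_def E_def by blast
  have tr: "opeq (S - E) (ptrace S E (opprod S (map (\<lambda>m. opmul S (a m) (b m)) [1..<n+1])))
                         (ptrace S E (opprod S (map (\<lambda>m. opmul S (b' m) (a' m)) [1..<n+1])))"
    by (rule conj_trace[OF finS ES q1 q2 h2[unfolded D_def]])
  have cm: "opeq S (opmul S (lift S (TS L (Two i) x) F) (lift S (TS L (Two j) y) G)) (opmul S (lift S (TS L (Two j) y) G) (lift S (TS L (Two i) x) F))"
    if "i \<noteq> j" "1 \<le> i" "i \<le> n" "1 \<le> j" "j \<le> n" "x \<in> {Three, Four}" "y \<in> {Three, Four}" "x \<noteq> y" for i j x y F G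
  proof (rule lift_commute[OF finS])
    show "TS L (Two i) x \<subseteq> S" using that TSsub[of i] by auto
    show "TS L (Two j) y \<subseteq> S" using that TSsub[of j] by auto
    show "TS L (Two i) x \<inter> TS L (Two j) y = {}" using that by (auto simp: TS_iff)
  qed
  have h4: "opeq S (opprod S (map (\<lambda>m. opmul S (a m) (b m)) [1..<n+1]))
      (opmul S (opprod S (map a [1..<n+1])) (opprod S (map b [1..<n+1])))"
    by (rule prod_split[OF finS]) (unfold a_def b_def, rule cm, auto)
  have h5: "opeq S (opprod S (map (\<lambda>m. opmul S (b' m) (a' m)) [1..<n+1]))
      (opmul S (opprod S (map b' [1..<n+1])) (opprod S (map a' [1..<n+1])))"
    by (rule prod_split[OF finS]) (unfold a'_def b'_def, rule cm, auto)
  define ZA where "ZA c = opprod (W \<union> T3) (map (\<lambda>m. lift (W \<union> T3) (TS L (Two m) Three) (trred R L r1 (c + of_nat m) (Two m) Three (r2 m) p3)) [1..<n+1])" for c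
  define ZB where "ZB c = opprod (W \<union> T4) (map (\<lambda>m. lift (W \<union> T4) (TS L (Two m) Four) (trred R1 L r1 (c + of_nat m) (Two m) Four (r2 m) p4)) [1..<n+1])" for c
  have W3S: "W \<union> T3 \<subseteq> S" and W4S: "W \<union> T4 \<subseteq> S" using E34 unfolding S_def by auto
  have lA: "opeq S (opprod S (map (\<lambda>m. lift S (TS L (Two m) Three) (trred R L r1 (c + of_nat m) (Two m) Three (r2 m) p3)) [1..<n+1])) (lift S (W \<union> T3) (ZA c))" for c
    unfolding ZA_def by (rule opeq_sym[OF lift_opprod_lifts[OF finS W3S]]) (rule TSsub(3); auto)
  have lB: "opeq S (opprod S (map (\<lambda>m. lift S (TS L (Two m) Four) (trred R1 L r1 (c + of_nat m) (Two m) Four (r2 m) p4)) [1..<n+1])) (lift S (W \<union> T4) (ZB c))" for c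
    unfolding ZB_def by (rule opeq_sym[OF lift_opprod_lifts[OF finS W4S]]) (rule TSsub(4); auto)
  have trA: "ptrace (W \<union> T3) T3 (ZA c) = transfer R L M r1 r2 c p3" for c
    unfolding ZA_def W_def T3_def n_def transfer_unfold ..
  have trB: "opeq W (ptrace (W \<union> T4) T4 (ZB c)) (transfer R1 L M r1 r2 c p4)" for c
    unfolding ZB_def W_def T4_def n_def by (rule four_three)
  have dW: "S - (T3 \<union> T4) = W" "S - (T4 \<union> T3) = W" "(W \<union> T3) - T3 = W" "(W \<union> T4) - T4 = W"
    using SE E34 unfolding W_def T3_def T4_def by (auto simp: Wslots_def)
  have djT: "T3 \<inter> (W \<union> T4) = {}" "T4 \<inter> (W \<union> T3) = {}"
    unfolding W_def T3_def T4_def by (auto simp: Wslots_def)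
  have key: "opeq W (ptrace S E (opmul S (lift S (W \<union> T3) (ZA c)) (lift S (W \<union> T4) (ZB c'))))
      (opmul W (transfer R L M r1 r2 c p3) (transfer R1 L M r1 r2 c' p4))" for c c'
  proof -
    have "opeq (S - (T3 \<union> T4)) (ptrace S (T3 \<union> T4) (opmul S (lift S (W \<union> T3) (ZA c)) (lift S (W \<union> T4) (ZB c'))))
      (opmul (S - (T3 \<union> T4)) (lift (S - (T3 \<union> T4)) ((W \<union> T3) - T3) (ptrace (W \<union> T3) T3 (ZA c)))
                              (lift (S - (T3 \<union> T4)) ((W \<union> T4) - T4) (ptrace (W \<union> T4) T4 (ZB c'))))"
      by (rule trace2[OF finS W3S W4S _ _ djT]) auto
    then have "opeq W (ptrace S E (opmul S (lift S (W \<union> T3) (ZA c)) (lift S (W \<union> T4) (ZB c'))))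
      (opmul W (lift W W (ptrace (W \<union> T3) T3 (ZA c))) (lift W W (ptrace (W \<union> T4) T4 (ZB c'))))"
      unfolding dW E34(1)[symmetric] SE .
    also have "opeq W \<dots> (opmul W (transfer R L M r1 r2 c p3) (transfer R1 L M r1 r2 c' p4))"
      by (intro opmul_cong opeq_trans[OF lift_self]) (simp_all add: trA trB)
    finally show ?thesis .
  qed
  have key': "opeq W (ptrace S E (opmul S (lift S (W \<union> T4) (ZB c')) (lift S (W \<union> T3) (ZA c))))
      (opmul W (transfer R1 L M r1 r2 c' p4) (transfer R L M r1 r2 c p3))" for c c'
  proof -
    have "opeq (S - (T4 \<union> T3)) (ptrace S (T4 \<union> T3) (opmul S (lift S (W \<union> T4) (ZB c')) (lift S (W \<union> T3) (ZA c))))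
      (opmul (S - (T4 \<union> T3)) (lift (S - (T4 \<union> T3)) ((W \<union> T4) - T4) (ptrace (W \<union> T4) T4 (ZB c')))
                              (lift (S - (T4 \<union> T3)) ((W \<union> T3) - T3) (ptrace (W \<union> T3) T3 (ZA c))))"
      by (rule trace2[OF finS W4S W3S _ _ djT(2,1)]) auto
    then have "opeq W (ptrace S E (opmul S (lift S (W \<union> T4) (ZB c')) (lift S (W \<union> T3) (ZA c))))
      (opmul W (lift W W (ptrace (W \<union> T4) T4 (ZB c'))) (lift W W (ptrace (W \<union> T3) T3 (ZA c))))"
      unfolding dW E34(2)[symmetric] SE .
    also have "opeq W \<dots> (opmul W (transfer R1 L M r1 r2 c' p4) (transfer R L M r1 r2 c p3))"
      by (intro opmul_cong opeq_trans[OF lift_self]) (simp_all add: trA trB)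
    finally show ?thesis .
  qed
  have SEW: "S - E = W" by (rule SE)
  have pc: "opeq W (ptrace S E A) (ptrace S E B)" if "opeq S A B" for A B
    using ptrace_cong[OF ES that] unfolding SEW .
  have "opeq W (opmul W (transfer R L M r1 r2 \<sigma> p3) (transfer R1 L M r1 r2 (\<sigma> + 1) p4))
      (ptrace S E (opmul S (lift S (W \<union> T3) (ZA \<sigma>)) (lift S (W \<union> T4) (ZB (\<sigma> + 1)))))"
    by (rule opeq_sym[OF key])
  also have "opeq W \<dots> (ptrace S E (opmul S (opprod S (map a [1..<n+1])) (opprod S (map b [1..<n+1]))))"
    unfolding a_def b_def by (intro pc opmul_cong opeq_sym[OF lA] opeq_sym[OF lB])
  also have "opeq W \<dots> (ptrace S E (opprod S (map (\<lambda>m. opmul S (a m) (b m)) [1..<n+1])))"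
    by (intro pc opeq_sym[OF h4])
  also have "opeq W \<dots> (ptrace S E (opprod S (map (\<lambda>m. opmul S (b' m) (a' m)) [1..<n+1])))"
    using tr unfolding SEW .
  also have "opeq W \<dots> (ptrace S E (opmul S (opprod S (map b' [1..<n+1])) (opprod S (map a' [1..<n+1]))))"
    by (intro pc h5)
  also have "opeq W \<dots> (ptrace S E (opmul S (lift S (W \<union> T4) (ZB \<sigma>)) (lift S (W \<union> T3) (ZA (\<sigma> + 1)))))"
    unfolding a'_def b'_def by (intro pc opmul_cong lA lB)
  also have "opeq W \<dots> (opmul W (transfer R1 L M r1 r2 \<sigma> p4) (transfer R L M r1 r2 (\<sigma> + 1) p3))"
    by (rule key')
  finally show ?thesis unfolding W_def .
qed


lemma chain4:
  assumes fin: "finite S"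
    and r1: "opeq S (opmul S a1 e0) (opmul S g1 c0)"
    and r2: "opeq S (opmul S a0 g1) (opmul S e0 d1)"
    and r3: "opeq S (opmul S c0 f1) (opmul S h0 a1)"
    and r4: "opeq S (opmul S d1 h0) (opmul S f1 a0)"
  shows "opeq S (opmul S (opmul S a0 a1) (opmul S e0 f1)) (opmul S (opmul S e0 f1) (opmul S a0 a1))"
proof -
  note as = opmul_assoc[OF fin] and as' = opmul_assoc'[OF fin]
  have "opeq S (opmul S (opmul S a0 a1) (opmul S e0 f1)) (opmul S a0 (opmul S a1 (opmul S e0 f1)))" by (rule as)
  also have "opeq S \<dots> (opmul S a0 (opmul S (opmul S a1 e0) f1))" by (rule opmul_congR[OF as'])
  also have "opeq S \<dots> (opmul S a0 (opmul S (opmul S g1 c0) f1))" by (rule opmul_congR[OF opmul_congL[OF r1]])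
  also have "opeq S \<dots> (opmul S a0 (opmul S g1 (opmul S c0 f1)))" by (rule opmul_congR[OF as])
  also have "opeq S \<dots> (opmul S a0 (opmul S g1 (opmul S h0 a1)))" by (rule opmul_congR[OF opmul_congR[OF r3]])
  also have "opeq S \<dots> (opmul S (opmul S a0 g1) (opmul S h0 a1))" by (rule as')
  also have "opeq S \<dots> (opmul S (opmul S e0 d1) (opmul S h0 a1))" by (rule opmul_congL[OF r2])
  also have "opeq S \<dots> (opmul S e0 (opmul S d1 (opmul S h0 a1)))" by (rule as)
  also have "opeq S \<dots> (opmul S e0 (opmul S (opmul S d1 h0) a1))" by (rule opmul_congR[OF as'])
  also have "opeq S \<dots> (opmul S e0 (opmul S (opmul S f1 a0) a1))" by (rule opmul_congR[OF opmul_congL[OF r4]])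
  also have "opeq S \<dots> (opmul S e0 (opmul S f1 (opmul S a0 a1)))" by (rule opmul_congR[OF as])
  also have "opeq S \<dots> (opmul S (opmul S e0 f1) (opmul S a0 a1))" by (rule as')
  finally show ?thesis .
qed

lemma conj_mul:
  assumes fin: "finite S" and pq: "opeq S (opmul S P Q) (opid S)"
  shows "opeq S (opmul S (opmul S Q (opmul S U P)) (opmul S Q (opmul S V P))) (opmul S Q (opmul S (opmul S U V) P))"
proof -
  note as = opmul_assoc[OF fin] and as' = opmul_assoc'[OF fin]
  have "opeq S (opmul S (opmul S Q (opmul S U P)) (opmul S Q (opmul S V P)))
     (opmul S Q (opmul S (opmul S U P) (opmul S Q (opmul S V P))))" by (rule as)
  also have "opeq S \<dots> (opmul S Q (opmul S U (opmul S P (opmul S Q (opmul S V P)))))" by (rule opmul_congR[OF as])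
  also have "opeq S \<dots> (opmul S Q (opmul S U (opmul S (opmul S P Q) (opmul S V P))))"
    by (rule opmul_congR[OF opmul_congR[OF as']])
  also have "opeq S \<dots> (opmul S Q (opmul S U (opmul S (opid S) (opmul S V P))))"
    by (rule opmul_congR[OF opmul_congR[OF opmul_congL[OF pq]]])
  also have "opeq S \<dots> (opmul S Q (opmul S U (opmul S V P)))"
    by (rule opmul_congR[OF opmul_congR[OF opmul_id_left[OF fin]]])
  also have "opeq S \<dots> (opmul S Q (opmul S (opmul S U V) P))" by (rule opmul_congR[OF as'])
  finally show ?thesis .
qed

lemma comm_diag:
  assumes fin: "finite S" and inj: "inj_on ev (states S)"
    and c: "opeq S (opmul S B (\<lambda>x y. if x = y then ev x else 0)) (opmul S (\<lambda>x y. if x = y then ev x else 0) B)"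
    and x: "x \<in> states S" and y: "y \<in> states S" and xy: "x \<noteq> y"
  shows "B x y = 0"
proof -
  have l: "opmul S B (\<lambda>x y. if x = y then ev x else 0) x y = B x y * ev y"
  proof -
    have "opmul S B (\<lambda>x y. if x = y then ev x else 0) x y = (\<Sum>z\<in>states S. if y = z then B x z * ev z else 0)"
      unfolding opmul_def by (intro sum.cong) auto
    also have "\<dots> = B x y * ev y" using y fin by (simp add: finite_states)
    finally show ?thesis .
  qed
  have r: "opmul S (\<lambda>x y. if x = y then ev x else 0) B x y = ev x * B x y"
  proof -
    have "opmul S (\<lambda>x y. if x = y then ev x else 0) B x y = (\<Sum>z\<in>states S. if x = z then ev z * B z y else 0)"
      unfolding opmul_def by (intro sum.cong) auto
    also have "\<dots> = ev x * B x y" using x fin by (simp add: finite_states)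
    finally show ?thesis .
  qed
  have "B x y * ev y = ev x * B x y" using opeqD[OF c x y] l r by simp
  then have "B x y * (ev y - ev x) = 0" by (simp add: algebra_simps)
  moreover have "ev y \<noteq> ev x" using inj x y xy by (auto dest: inj_onD)
  ultimately show ?thesis by simp
qed

lemma diag_mul_comm:
  fixes B C :: "('s, 'v::finite) kop"
  assumes fin: "finite S"
    and dB: "\<And>x y. x \<in> states S \<Longrightarrow> y \<in> states S \<Longrightarrow> x \<noteq> y \<Longrightarrow> B x y = 0"
    and dC: "\<And>x y. x \<in> states S \<Longrightarrow> y \<in> states S \<Longrightarrow> x \<noteq> y \<Longrightarrow> C x y = 0"
  shows "opeq S (opmul S B C) (opmul S C B)"
  unfolding opeq_def
proof (intro ballI)
  fix x y :: "'s \<Rightarrow> 'v" assume x: "x \<in> states S" and y: "y \<in> states S"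
  have e: "opmul S F G x y = (if x = y then F x x * G x x else 0)"
    if dF: "\<And>x y. x \<in> states S \<Longrightarrow> y \<in> states S \<Longrightarrow> x \<noteq> y \<Longrightarrow> F x y = 0"
    and dG: "\<And>x y. x \<in> states S \<Longrightarrow> y \<in> states S \<Longrightarrow> x \<noteq> y \<Longrightarrow> G x y = 0" for F G :: "('s, 'v) kop"
  proof -
    have "opmul S F G x y = (\<Sum>z\<in>states S. if x = z then F x z * G z y else 0)"
      unfolding opmul_def using x by (intro sum.cong) (auto simp: dF)
    also have "\<dots> = F x x * G x y" using x fin by (simp add: finite_states)
    also have "\<dots> = (if x = y then F x x * G x x else 0)" using x y dG by auto
    finally show ?thesis .
  qed
  show "opmul S B C x y = opmul S C B x y"
    using e[of B C, OF dB dC] e[of C B, OF dC dB] by (simp add: mult.commute)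
qed

lemma diag_argument:
  assumes fin: "finite S"
    and pq: "opeq S (opmul S P Q) (opid S)" and qp: "opeq S (opmul S Q P) (opid S)"
    and inj: "inj_on ev (states S)"
    and dA: "opeq S (opmul S Q (opmul S A P)) (\<lambda>x y. if x = y then ev x else 0)"
    and cX: "opeq S (opmul S X A) (opmul S A X)" and cY: "opeq S (opmul S Y A) (opmul S A Y)"
  shows "opeq S (opmul S X Y) (opmul S Y X)"
proof -
  let ?D = "\<lambda>x y. if x = y then ev x else 0"
  let ?c = "\<lambda>U. opmul S Q (opmul S U P)" and ?u = "\<lambda>U. opmul S P (opmul S U Q)"
  note as = opmul_assoc[OF fin] and as' = opmul_assoc'[OF fin]
  have cc: "opeq S (opmul S (?c U) ?D) (opmul S ?D (?c U))" if cU: "opeq S (opmul S U A) (opmul S A U)" for U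
  proof -
    have "opeq S (opmul S (?c U) ?D) (opmul S (?c U) (?c A))" by (rule opmul_congR[OF opeq_sym[OF dA]])
    also have "opeq S \<dots> (?c (opmul S U A))" by (rule conj_mul[OF fin pq])
    also have "opeq S \<dots> (?c (opmul S A U))" by (rule opmul_congR[OF opmul_congL[OF cU]])
    also have "opeq S \<dots> (opmul S (?c A) (?c U))" by (rule opeq_sym[OF conj_mul[OF fin pq]])
    also have "opeq S \<dots> (opmul S ?D (?c U))" by (rule opmul_congL[OF dA])
    finally show ?thesis .
  qed
  have diag: "(?c U) x y = 0" if "opeq S (opmul S U A) (opmul S A U)" "x \<in> states S" "y \<in> states S" "x \<noteq> y" for U x y
    by (rule comm_diag[OF fin inj cc[OF that(1)] that(2-4)])
  have dcomm: "opeq S (opmul S (?c X) (?c Y)) (opmul S (?c Y) (?c X))"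
    by (rule diag_mul_comm[OF fin]) (auto intro: diag[OF cX] diag[OF cY])
  have uc: "opeq S (?u (?c U)) U" for U
  proof -
    have "opeq S (?u (?c U)) (opmul S P (opmul S Q (opmul S (opmul S U P) Q)))" by (rule opmul_congR[OF as])
    also have "opeq S \<dots> (opmul S (opmul S P Q) (opmul S (opmul S U P) Q))" by (rule as')
    also have "opeq S \<dots> (opmul S (opid S) (opmul S (opmul S U P) Q))" by (rule opmul_congL[OF pq])
    also have "opeq S \<dots> (opmul S (opmul S U P) Q)" by (rule opmul_id_left[OF fin])
    also have "opeq S \<dots> (opmul S U (opmul S P Q))" by (rule as)
    also have "opeq S \<dots> (opmul S U (opid S))" by (rule opmul_congR[OF pq])
    also have "opeq S \<dots> U" by (rule opmul_id_right[OF fin])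
    finally show ?thesis .
  qed
  have um: "opeq S (opmul S (?u U) (?u V)) (?u (opmul S U V))" for U V
    by (rule conj_mul[OF fin qp])
  have "opeq S (opmul S X Y) (opmul S (?u (?c X)) (?u (?c Y)))"
    by (rule opmul_cong[OF opeq_sym[OF uc] opeq_sym[OF uc]])
  also have "opeq S \<dots> (?u (opmul S (?c X) (?c Y)))" by (rule um)
  also have "opeq S \<dots> (?u (opmul S (?c Y) (?c X)))" by (rule opmul_congR[OF opmul_congL[OF dcomm]])
  also have "opeq S \<dots> (opmul S (?u (?c Y)) (?u (?c X)))" by (rule opeq_sym[OF um])
  also have "opeq S \<dots> (opmul S Y X)" by (rule opmul_cong[OF uc uc])
  finally show ?thesis .
qed

theorem mainTheorem3:
  fixes R R1 R2 R3 :: "bit \<Rightarrow> 'c \<Rightarrow> 'c \<Rightarrow> 'c \<Rightarrow> 'b::finite k3"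
    and L M :: nat and r1 r2 :: "nat \<Rightarrow> 'c"
  assumes "L \<ge> 1" and "M \<ge> 1"
    and bte: "\<And>\<sigma>. BTE R R1 R2 R3 \<sigma>"
    and inv3: "\<And>\<sigma> p1 p2 p3. k3_invertible (R3 \<sigma> p1 p2 p3)"
    and invtr: "\<And>\<sigma> p3 p4. op_invertible (TS L Three Four) (trred R2 L r1 \<sigma> Three Four p3 p4)"
    and diag: "\<exists>t t'. simple_diagonalizable (Wslots L M) (transfer2 R1 L M r1 r2 t t')"
  shows "\<forall>r r' s s'. opeq (Wslots L M)
            (opmul (Wslots L M) (transfer2 R L M r1 r2 r r') (transfer2 R L M r1 r2 s s'))
            (opmul (Wslots L M) (transfer2 R L M r1 r2 s s') (transfer2 R L M r1 r2 r r'))"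
proof (intro allI)
  fix r r' s s'
  let ?W = "Wslots L M"
  obtain t t' where sd: "simple_diagonalizable ?W (transfer2 R1 L M r1 r2 t t')" using diag by blast
  then obtain P Q ev where pq: "opeq ?W (opmul ?W P Q) (opid ?W)" and qp: "opeq ?W (opmul ?W Q P) (opid ?W)"
    and inj: "inj_on ev (states ?W)"
    and dA: "opeq ?W (opmul ?W Q (opmul ?W (transfer2 R1 L M r1 r2 t t') P)) (\<lambda>x y. if x = y then ev x else 0)"
    unfolding simple_diagonalizable_def by blast
  note rel = transfer_rel[OF bte inv3 invtr, of M r2]
  have comm: "opeq ?W (opmul ?W (transfer2 R L M r1 r2 u u') (transfer2 R1 L M r1 r2 t t'))
                      (opmul ?W (transfer2 R1 L M r1 r2 t t') (transfer2 R L M r1 r2 u u'))" for u u'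
    unfolding transfer2_def
  proof (rule chain4[OF finite_W])
    show "opeq ?W (opmul ?W (transfer R L M r1 r2 1 u') (transfer R1 L M r1 r2 0 t))
                  (opmul ?W (transfer R1 L M r1 r2 1 t) (transfer R L M r1 r2 0 u'))"
      using rel[of 1 u' t] by simp
    show "opeq ?W (opmul ?W (transfer R L M r1 r2 0 u) (transfer R1 L M r1 r2 1 t))
                  (opmul ?W (transfer R1 L M r1 r2 0 t) (transfer R L M r1 r2 1 u))"
      using rel[of 0 u t] by simp
    show "opeq ?W (opmul ?W (transfer R L M r1 r2 0 u') (transfer R1 L M r1 r2 1 t'))
                  (opmul ?W (transfer R1 L M r1 r2 0 t') (transfer R L M r1 r2 1 u'))"
      using rel[of 0 u' t'] by simp
    show "opeq ?W (opmul ?W (transfer R L M r1 r2 1 u) (transfer R1 L M r1 r2 0 t'))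
                  (opmul ?W (transfer R1 L M r1 r2 1 t') (transfer R L M r1 r2 0 u))"
      using rel[of 1 u t'] by simp
  qed
  show "opeq ?W (opmul ?W (transfer2 R L M r1 r2 r r') (transfer2 R L M r1 r2 s s'))
            (opmul ?W (transfer2 R L M r1 r2 s s') (transfer2 R L M r1 r2 r r'))"
    by (rule diag_argument[OF finite_W pq qp inj dA comm comm])
qed


end
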